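(* Let $\bar Q$ be a gentle bound quiver with finite reduced non-kissing complex. For every biclosed set of strings $S\in\mathrm{Bicl}(\bar Q)$ one has $\zeta(\eta(S))=\pi_\downarrow(S)$.
   Context: A gentle bound quiver is $\bar Q=(Q,I)$, $Q$ finite (paths composed left to right), $I$ admissible generated by length-two paths, each vertex with at most two incoming and two outgoing arrows, and for each arrow $\beta$ at most one $\alpha$ with $t(\alpha)=s(\beta),\alpha\beta\notin I$, at most one with $\alpha\beta\in I$, and dually for $\gamma$ with $s(\gamma)=t(\beta)$. Strings: composable reduced words in arrows and inverse arrows with no factor $\pi^{\pm1}$ for a path $\pi\in I$, or $\varepsilon_v$; $\mathcal S^\pm(\bar Q)$ = strings up to inversion. Blossoming quiver $\bar Q^\circledast$: add at each $v\in Q_0$ new arrows to/from new blossom vertices so each $v$ has two incoming and two outgoing arrows, with length-two relations at $v$ making it gentle. Walks: maximal strings of $\bar Q^\circledast$, up to inversion. Substrings of a walk: occurrences of factors (possibly a vertex) with all vertices in $Q_0$; top (bottom) if both adjacent arrows point away from (towards) it; $\Sigma_{\mathrm{bot}}(\omega)$ = set of bottom substrings of $\omega$ (as strings). For strings $\sigma$, $\Sigma_{\mathrm{bot}}(\sigma)$ is the set of substrings (including vertices) at each endpoint of which $\sigma$ ends or has an arrow pointing towards it. $\omega$ kisses $\omega'$ if a string is a top substring of $\omega$ and bottom substring of $\omega'$. $\mathcal K(\bar Q)$: faces are sets of pairwise non-kissing, non-self-kissing walks; finite reduced complex means finitely many non-straight walks. Closure: $\sigma\circ\tau$ = undirected strings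 joining an endpoint of $\sigma$ to one of $\tau$ by an arrow $\gamma^{\pm1}$, $\gamma\in Q_1$; $\overline S$ = union of all $\sigma_1\circ\cdots\circ\sigma_\ell$ ($\ell\ge1$, $\sigma_i\in S$); biclosed = $S$ and complement closed; $\mathrm{Bicl}(\bar Q)$ the set of biclosed sets. $\pi_\downarrow(S)=\{\sigma:\Sigma_{\mathrm{bot}}(\sigma)\subseteq S\}$. $\eta$: for $S\in\mathrm{Bicl}(\bar Q)$ and $\alpha\in Q^\circledast_1$, $\omega(\alpha,S)=\alpha_{-\ell}^{\epsilon_{-\ell}}\cdots\alpha_{-1}^{\epsilon_{-1}}\,\alpha\,\alpha_1^{\epsilon_1}\cdots\alpha_r^{\epsilon_r}$ is the walk with $\epsilon_i=-1$ iff the string $\alpha_1^{\epsilon_1}\cdots\alpha_{i-1}^{\epsilon_{i-1}}$ (which is $\varepsilon_{t(\alpha)}$ for $i=1$) lies in $S$, and $\epsilon_{-i}=1$ iff $\alpha_{-i+1}^{\epsilon_{-i+1}}\cdots\alpha_{-1}^{\epsilon_{-1}}$ (which is $\varepsilon_{s(\alpha)}$ for $i=1$) lies in $S$, extended until both ends are blossom vertices. $\eta(S)=\{\omega(\alpha,S):\alpha\in Q^\circledast_1\}$ as undirected walks (a facet of $\mathcal K(\bar Q)$). $\zeta(F)=\overline{\bigcup_{\omega\in F}\Sigma_{\mathrm{bot}}(\omega)}$ for a facet $F$. *)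

theory Defs
  imports Main
begin

record ('v, 'a) bquiver =
  verts :: "'v set"
  arrs  :: "'a set"
  src   :: "'a \<Rightarrow> 'v"
  tgt   :: "'a \<Rightarrow> 'v"
  rels  :: "('a \<times> 'a) set"   \<comment> \<open>generating length-two paths (alpha,beta) of I, composed left to right\<close>

definition wf_bquiver :: "('v, 'a) bquiver \<Rightarrow> bool" where
  "wf_bquiver Q \<longleftrightarrow> finite (verts Q) \<and> finite (arrs Q)
     \<and> (\<forall>\<alpha>\<in>arrs Q. src Q \<alpha> \<in> verts Q \<and> tgt Q \<alpha> \<in> verts Q)
     \<and> rels Q \<subseteq> {(\<alpha>, \<beta>). \<alpha> \<in> arrs Q \<and> \<beta> \<in> arrs Q \<and> tgt Q \<alpha> = src Q \<beta>}"

definition is_path :: "('v, 'a) bquiver \<Rightarrow> 'a list \<Rightarrow> bool" where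
  "is_path Q p \<longleftrightarrow> set p \<subseteq> arrs Q
     \<and> (\<forall>i. Suc i < length p \<longrightarrow> tgt Q (p ! i) = src Q (p ! Suc i))"

definition admissible :: "('v, 'a) bquiver \<Rightarrow> bool" where
  "admissible Q \<longleftrightarrow> (\<exists>m. \<forall>p. is_path Q p \<and> length p = m \<longrightarrow>
       (\<exists>i. Suc i < length p \<and> (p ! i, p ! Suc i) \<in> rels Q))"

definition gentle :: "('v, 'a) bquiver \<Rightarrow> bool" where
  "gentle Q \<longleftrightarrow> wf_bquiver Q \<and> admissible Q
     \<and> (\<forall>v\<in>verts Q. card {\<alpha>\<in>arrs Q. tgt Q \<alpha> = v} \<le> 2 \<and> card {\<alpha>\<in>arrs Q. src Q \<alpha> = v} \<le> 2)
     \<and> (\<forall>\<beta>\<in>arrs Q.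
          card {\<alpha>\<in>arrs Q. tgt Q \<alpha> = src Q \<beta> \<and> (\<alpha>, \<beta>) \<notin> rels Q} \<le> 1
        \<and> card {\<alpha>\<in>arrs Q. tgt Q \<alpha> = src Q \<beta> \<and> (\<alpha>, \<beta>) \<in> rels Q} \<le> 1
        \<and> card {\<gamma>\<in>arrs Q. src Q \<gamma> = tgt Q \<beta> \<and> (\<beta>, \<gamma>) \<notin> rels Q} \<le> 1
        \<and> card {\<gamma>\<in>arrs Q. src Q \<gamma> = tgt Q \<beta> \<and> (\<beta>, \<gamma>) \<in> rels Q} \<le> 1)"

definition is_blossoming :: "('v, 'a) bquiver \<Rightarrow> ('v, 'a) bquiver \<Rightarrow> bool" where
  "is_blossoming Q Qb \<longleftrightarrow> gentle Qb
     \<and> verts Q \<subseteq> verts Qb \<and> arrs Q \<subseteq> arrs Qb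
     \<and> (\<forall>\<alpha>\<in>arrs Q. src Qb \<alpha> = src Q \<alpha> \<and> tgt Qb \<alpha> = tgt Q \<alpha>)
     \<and> rels Qb \<inter> (arrs Q \<times> arrs Q) = rels Q
     \<and> (\<forall>\<alpha>\<in>arrs Qb - arrs Q. (src Qb \<alpha> \<in> verts Q) \<noteq> (tgt Qb \<alpha> \<in> verts Q))
     \<and> (\<forall>b\<in>verts Qb - verts Q. card {\<alpha>\<in>arrs Qb. src Qb \<alpha> = b \<or> tgt Qb \<alpha> = b} = 1)
     \<and> (\<forall>v\<in>verts Q. card {\<alpha>\<in>arrs Qb. tgt Qb \<alpha> = v} = 2 \<and> card {\<alpha>\<in>arrs Qb. src Qb \<alpha> = v} = 2)"

text \<open>A letter is an arrow together with an orientation (True = direct arrow, False = inverse arrow).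
  A (directed) string is a start vertex together with a list of letters; (v, []) is the
  lazy string \<open>\<epsilon>_v\<close>.\<close>

type_synonym 'a letter = "'a \<times> bool"
type_synonym ('v, 'a) str = "'v \<times> 'a letter list"

fun lsrc :: "('v, 'a) bquiver \<Rightarrow> 'a letter \<Rightarrow> 'v" where
  "lsrc Q (\<alpha>, d) = (if d then src Q \<alpha> else tgt Q \<alpha>)"

fun ltgt :: "('v, 'a) bquiver \<Rightarrow> 'a letter \<Rightarrow> 'v" where
  "ltgt Q (\<alpha>, d) = (if d then tgt Q \<alpha> else src Q \<alpha>)"

definition vert_at :: "('v, 'a) bquiver \<Rightarrow> ('v, 'a) str \<Rightarrow> nat \<Rightarrow> 'v" where
  "vert_at Q \<sigma> k = (if k = 0 then fst \<sigma> else ltgt Q (snd \<sigma> ! (k - 1)))"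

definition str_end :: "('v, 'a) bquiver \<Rightarrow> ('v, 'a) str \<Rightarrow> 'v" where
  "str_end Q \<sigma> = vert_at Q \<sigma> (length (snd \<sigma>))"

definition inv_str :: "('v, 'a) bquiver \<Rightarrow> ('v, 'a) str \<Rightarrow> ('v, 'a) str" where
  "inv_str Q \<sigma> = (str_end Q \<sigma>, rev (map (\<lambda>(\<alpha>, d). (\<alpha>, \<not> d)) (snd \<sigma>)))"

text \<open>sets of undirected strings are represented as sets of directed strings closed under inversion\<close>
definition sym_cl :: "('v, 'a) bquiver \<Rightarrow> ('v, 'a) str set \<Rightarrow> ('v, 'a) str set" where
  "sym_cl Q X = X \<union> inv_str Q ` X"

definition is_string :: "('v, 'a) bquiver \<Rightarrow> ('v, 'a) str \<Rightarrow> bool" where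
  "is_string Q \<sigma> \<longleftrightarrow> (let ls = snd \<sigma> in
       fst \<sigma> \<in> verts Q
     \<and> (\<forall>k<length ls. fst (ls ! k) \<in> arrs Q \<and> lsrc Q (ls ! k) = vert_at Q \<sigma> k)
     \<and> (\<forall>k. Suc k < length ls \<longrightarrow>
            \<not> (fst (ls ! Suc k) = fst (ls ! k) \<and> snd (ls ! Suc k) \<noteq> snd (ls ! k)))
     \<and> (\<forall>k. Suc k < length ls \<longrightarrow>
            \<not> (snd (ls ! k) \<and> snd (ls ! Suc k) \<and> (fst (ls ! k), fst (ls ! Suc k)) \<in> rels Q))
     \<and> (\<forall>k. Suc k < length ls \<longrightarrow>
            \<not> (\<not> snd (ls ! k) \<and> \<not> snd (ls ! Suc k) \<and> (fst (ls ! Suc k), fst (ls ! k)) \<in> rels Q)))"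

definition Strings :: "('v, 'a) bquiver \<Rightarrow> ('v, 'a) str set" where
  "Strings Q = {\<sigma>. is_string Q \<sigma>}"

definition is_walk :: "('v, 'a) bquiver \<Rightarrow> ('v, 'a) str \<Rightarrow> bool" where
  "is_walk Qb \<omega> \<longleftrightarrow> is_string Qb \<omega>
     \<and> \<not> (\<exists>l. is_string Qb (fst \<omega>, snd \<omega> @ [l]))
     \<and> \<not> (\<exists>l. is_string Qb (lsrc Qb l, l # snd \<omega>))"

definition straight :: "('v, 'a) str \<Rightarrow> bool" where
  "straight \<omega> \<longleftrightarrow> (\<forall>l\<in>set (snd \<omega>). snd l) \<or> (\<forall>l\<in>set (snd \<omega>). \<not> snd l)"

text \<open>finite reduced non-kissing complex: finitely many non-straight walks\<close>
definition finite_reduced_complex :: "('v, 'a) bquiver \<Rightarrow> bool" where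
  "finite_reduced_complex Qb \<longleftrightarrow> finite {\<omega>. is_walk Qb \<omega> \<and> \<not> straight \<omega>}"

text \<open>bottom substrings of a walk: factors with all vertices in Q_0 whose two adjacent
  letters point towards the factor\<close>
definition sigma_bot_walk :: "('v, 'a) bquiver \<Rightarrow> ('v, 'a) bquiver \<Rightarrow> ('v, 'a) str \<Rightarrow> ('v, 'a) str set" where
  "sigma_bot_walk Q Qb \<omega> = sym_cl Qb
     {(vert_at Qb \<omega> i, take (j - i) (drop i (snd \<omega>))) | i j.
        0 < i \<and> i \<le> j \<and> j < length (snd \<omega>)
      \<and> (\<forall>k. i \<le> k \<and> k \<le> j \<longrightarrow> vert_at Qb \<omega> k \<in> verts Q)
      \<and> snd (snd \<omega> ! (i - 1)) \<and> \<not> snd (snd \<omega> ! j)}"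

text \<open>bottom substrings of a string: factors (possibly lazy) at each endpoint of which the string
  ends or has a letter pointing towards the factor\<close>
definition sigma_bot_str :: "('v, 'a) bquiver \<Rightarrow> ('v, 'a) str \<Rightarrow> ('v, 'a) str set" where
  "sigma_bot_str Q \<sigma> = sym_cl Q
     {(vert_at Q \<sigma> i, take (j - i) (drop i (snd \<sigma>))) | i j.
        i \<le> j \<and> j \<le> length (snd \<sigma>)
      \<and> (i = 0 \<or> snd (snd \<sigma> ! (i - 1)))
      \<and> (j = length (snd \<sigma>) \<or> \<not> snd (snd \<sigma> ! j))}"

text \<open>closure: all strings \<open>\<sigma>_1 \<gamma>_1 \<sigma>_2 ... \<gamma>_{l-1} \<sigma>_l\<close> with \<open>\<sigma>_i \<in> S\<close> (either orientation,
  S being inversion-closed) and \<open>\<gamma>_i\<close> letters of arrows of Q\<close>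
inductive_set clos :: "('v, 'a) bquiver \<Rightarrow> ('v, 'a) str set \<Rightarrow> ('v, 'a) str set"
  for Q :: "('v, 'a) bquiver" and S :: "('v, 'a) str set" where
  base: "\<sigma> \<in> S \<Longrightarrow> \<sigma> \<in> clos Q S"
| join: "\<rho> \<in> clos Q S \<Longrightarrow> \<tau> \<in> S \<Longrightarrow> fst l \<in> arrs Q \<Longrightarrow>
         lsrc Q l = str_end Q \<rho> \<Longrightarrow> ltgt Q l = fst \<tau> \<Longrightarrow>
         is_string Q (fst \<rho>, snd \<rho> @ [l] @ snd \<tau>) \<Longrightarrow>
         (fst \<rho>, snd \<rho> @ [l] @ snd \<tau>) \<in> clos Q S"

definition Bicl :: "('v, 'a) bquiver \<Rightarrow> ('v, 'a) str set set" where
  "Bicl Q = {S. S \<subseteq> Strings Q \<and> inv_str Q ` S \<subseteq> S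
               \<and> clos Q S = S \<and> clos Q (Strings Q - S) = Strings Q - S}"

definition pi_down :: "('v, 'a) bquiver \<Rightarrow> ('v, 'a) str set \<Rightarrow> ('v, 'a) str set" where
  "pi_down Q S = {\<sigma> \<in> Strings Q. sigma_bot_str Q \<sigma> \<subseteq> S}"

definition is_omega :: "('v, 'a) bquiver \<Rightarrow> ('v, 'a) str set \<Rightarrow> 'a \<Rightarrow> ('v, 'a) str \<Rightarrow> bool" where
  "is_omega Qb S \<beta> \<omega> \<longleftrightarrow> is_walk Qb \<omega>
     \<and> (\<exists>pre post. snd \<omega> = pre @ [(\<beta>, True)] @ post
        \<and> (\<forall>i<length post. (\<not> snd (post ! i)) \<longleftrightarrow> (tgt Qb \<beta>, take i post) \<in> S)
        \<and> (\<forall>k<length pre. snd (pre ! k) \<longleftrightarrow> (ltgt Qb (pre ! k), drop (Suc k) pre) \<in> S))"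

definition eta :: "('v, 'a) bquiver \<Rightarrow> ('v, 'a) str set \<Rightarrow> ('v, 'a) str set" where
  "eta Qb S = sym_cl Qb {\<omega>. \<exists>\<beta>\<in>arrs Qb. is_omega Qb S \<beta> \<omega>}"

definition zeta :: "('v, 'a) bquiver \<Rightarrow> ('v, 'a) bquiver \<Rightarrow> ('v, 'a) str set \<Rightarrow> ('v, 'a) str set" where
  "zeta Q Qb F = clos Q (\<Union>\<omega>\<in>F. sigma_bot_walk Q Qb \<omega>)"

end

theory Submission
  imports Defs
begin


definition flip :: "'a letter \<Rightarrow> 'a letter" where "flip l = (fst l, \<not> snd l)"
definition rl :: "'a letter list \<Rightarrow> 'a letter list" where "rl ls = rev (map flip ls)"

definition lcompat :: "('v,'a) bquiver \<Rightarrow> 'a letter \<Rightarrow> 'a letter \<Rightarrow> bool" where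
 "lcompat G l l' \<longleftrightarrow> \<not> (fst l' = fst l \<and> snd l' \<noteq> snd l) \<and> \<not> (snd l \<and> snd l' \<and> (fst l, fst l') \<in> rels G)
    \<and> \<not> (\<not> snd l \<and> \<not> snd l' \<and> (fst l', fst l) \<in> rels G)"

fun chain :: "('v,'a) bquiver \<Rightarrow> 'v \<Rightarrow> 'a letter list \<Rightarrow> bool" where
  "chain G v [] = True"
| "chain G v (l # ls) = (fst l \<in> arrs G \<and> lsrc G l = v \<and> chain G (ltgt G l) ls \<and> (ls \<noteq> [] \<longrightarrow> lcompat G l (hd ls)))"

lemma str_end_simp: "str_end G (v, ls) = (if ls = [] then v else ltgt G (last ls))"
  by (simp add: str_end_def vert_at_def last_conv_nth)

lemma str_end_Nil[simp]: "str_end G (v, []) = v"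
  by (simp add: str_end_simp)

lemma str_end_Cons[simp]: "str_end G (v, l # ls) = str_end G (ltgt G l, ls)"
  by (simp add: str_end_simp)

lemma str_end_append: "str_end G (v, A @ B) = str_end G (str_end G (v, A), B)"
  by (induction A arbitrary: v) auto

lemma vert_at_take: "k \<le> length ls \<Longrightarrow> vert_at G (v, ls) k = str_end G (v, take k ls)"
  by (auto simp: vert_at_def str_end_simp last_conv_nth min_def)

definition srest :: "('v,'a) bquiver \<Rightarrow> ('v,'a) str \<Rightarrow> bool" where
  "srest Q \<sigma> \<longleftrightarrow> (let ls = snd \<sigma> in
       (\<forall>k<length ls. fst (ls ! k) \<in> arrs Q \<and> lsrc Q (ls ! k) = vert_at Q \<sigma> k)
     \<and> (\<forall>k. Suc k < length ls \<longrightarrow>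
            \<not> (fst (ls ! Suc k) = fst (ls ! k) \<and> snd (ls ! Suc k) \<noteq> snd (ls ! k)))
     \<and> (\<forall>k. Suc k < length ls \<longrightarrow>
            \<not> (snd (ls ! k) \<and> snd (ls ! Suc k) \<and> (fst (ls ! k), fst (ls ! Suc k)) \<in> rels Q))
     \<and> (\<forall>k. Suc k < length ls \<longrightarrow>
            \<not> (\<not> snd (ls ! k) \<and> \<not> snd (ls ! Suc k) \<and> (fst (ls ! Suc k), fst (ls ! k)) \<in> rels Q)))"

lemma is_string_srest: "is_string G \<sigma> \<longleftrightarrow> fst \<sigma> \<in> verts G \<and> srest G \<sigma>"
  by (simp add: is_string_def srest_def Let_def)

lemma vert_at_Cons_Suc: "vert_at G (v, l # ls) (Suc k) = vert_at G (ltgt G l, ls) k"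
  by (cases k) (auto simp: vert_at_def)

lemma srest_chain: "srest G (v, ls) \<longleftrightarrow> chain G v ls"
proof (induction ls arbitrary: v)
  case Nil
  then show ?case by (simp add: srest_def)
next
  case (Cons l ls)
  have "srest G (v, l # ls) \<longleftrightarrow> (fst l \<in> arrs G \<and> lsrc G l = v \<and> (ls \<noteq> [] \<longrightarrow> lcompat G l (hd ls)) \<and> srest G (ltgt G l, ls))"
    unfolding srest_def Let_def snd_conv
    apply (simp only: length_Cons All_less_Suc2 nth_Cons_0 nth_Cons_Suc vert_at_Cons_Suc)
    apply (cases ls)
     apply (simp add: vert_at_def)
    apply (auto simp: vert_at_def lcompat_def All_less_Suc2 nth_Cons split: nat.splits)
    done
  then show ?case using Cons by auto
qed

lemma is_string_chain: "is_string G (v, ls) \<longleftrightarrow> v \<in> verts G \<and> chain G v ls"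
  using is_string_srest srest_chain by fastforce




lemma chain_append: "chain G v (A @ B) \<longleftrightarrow> chain G v A \<and> chain G (str_end G (v, A)) B \<and> (A \<noteq> [] \<and> B \<noteq> [] \<longrightarrow> lcompat G (last A) (hd B))"
  by (induction A arbitrary: v) (auto simp: hd_append)

lemma lsrc_flip[simp]: "lsrc G (flip l) = ltgt G l" and ltgt_flip[simp]: "ltgt G (flip l) = lsrc G l"
  by (cases l; simp add: flip_def)+

lemma fst_flip[simp]: "fst (flip l) = fst l" and snd_flip[simp]: "snd (flip l) = (\<not> snd l)"
  and flip_flip[simp]: "flip (flip l) = l"
  by (auto simp: flip_def)

lemma rl_Nil[simp]: "rl [] = []" and rl_Cons[simp]: "rl (l # ls) = rl ls @ [flip l]"
  and rl_append[simp]: "rl (A @ B) = rl B @ rl A" and rl_rl[simp]: "rl (rl ls) = ls"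
  and length_rl[simp]: "length (rl ls) = length ls"
  and rl_eq_Nil[simp]: "(rl ls = []) = (ls = [])"
  by (simp_all add: rl_def rev_map comp_def)

lemma last_rl: "ls \<noteq> [] \<Longrightarrow> last (rl ls) = flip (hd ls)"
  by (cases ls) auto

lemma hd_rl: "ls \<noteq> [] \<Longrightarrow> hd (rl ls) = flip (last ls)"
  by (induction ls) auto

lemma set_rl: "set (rl ls) = flip ` set ls"
  by (simp add: rl_def)

lemma lcompat_flip: "lcompat G l l' \<Longrightarrow> lcompat G (flip l') (flip l)"
  by (auto simp: lcompat_def)

lemma chain_rl: "chain G v ls \<Longrightarrow> chain G (str_end G (v, ls)) (rl ls) \<and> str_end G (str_end G (v, ls), rl ls) = v"
proof (induction ls arbitrary: v)
  case Nil then show ?case by simp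
next
  case (Cons l ls)
  have c: "fst l \<in> arrs G" "lsrc G l = v" "chain G (ltgt G l) ls" "ls \<noteq> [] \<longrightarrow> lcompat G l (hd ls)"
    using Cons.prems by simp_all
  have IH: "chain G (str_end G (ltgt G l, ls)) (rl ls) \<and> str_end G (str_end G (ltgt G l, ls), rl ls) = ltgt G l"
    using Cons.IH[OF c(3)] .
  have "chain G (str_end G (v, l # ls)) (rl (l # ls))"
    unfolding rl_Cons str_end_Cons chain_append
  proof (intro conjI impI)
    show "chain G (str_end G (ltgt G l, ls)) (rl ls)" using IH by blast
    have e: "str_end G (str_end G (ltgt G l, ls), rl ls) = ltgt G l" using IH by blast
    show "chain G (str_end G (str_end G (ltgt G l, ls), rl ls)) [flip l]" unfolding e using c(1) by simp
    assume "rl ls \<noteq> [] \<and> [flip l] \<noteq> []"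
    then have "ls \<noteq> []" by simp
    then have "lcompat G l (hd ls)" "last (rl ls) = flip (hd ls)" using c(4) last_rl by auto
    then show "lcompat G (last (rl ls)) (hd [flip l])" using lcompat_flip by simp
  qed
  moreover have "str_end G (str_end G (v, l # ls), rl (l # ls)) = v"
    unfolding rl_Cons str_end_Cons str_end_append using IH c by simp
  ultimately show ?case by blast
qed

lemma inv_str_simp: "inv_str G (v, ls) = (str_end G (v, ls), rl ls)"
  by (simp add: inv_str_def rl_def flip_def case_prod_beta)

lemma inv_inv: "chain G v ls \<Longrightarrow> inv_str G (inv_str G (v, ls)) = (v, ls)"
proof -
  assume "chain G v ls"
  from chain_rl[OF this] have "str_end G (str_end G (v, ls), rl ls) = v" by blast
  then show ?thesis by (simp only: inv_str_simp rl_rl)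
qed

lemma str_end_verts: "wf_bquiver G \<Longrightarrow> v \<in> verts G \<Longrightarrow> chain G v ls \<Longrightarrow> str_end G (v, ls) \<in> verts G"
proof (induction ls arbitrary: v)
  case Nil then show ?case by simp
next
  case (Cons l ls)
  then have "ltgt G l \<in> verts G"
    by (cases l) (auto simp: wf_bquiver_def)
  with Cons show ?case by simp
qed

lemma is_string_inv: "wf_bquiver G \<Longrightarrow> is_string G (v, ls) \<Longrightarrow> is_string G (inv_str G (v, ls))"
proof -
  assume w: "wf_bquiver G" and s: "is_string G (v, ls)"
  then have c: "chain G v ls" "v \<in> verts G" by (simp_all add: is_string_chain)
  from chain_rl[OF c(1)] have "chain G (str_end G (v, ls)) (rl ls)" by blast
  moreover have "str_end G (v, ls) \<in> verts G" using str_end_verts[OF w c(2) c(1)] .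
  ultimately show ?thesis by (simp add: inv_str_simp is_string_chain)
qed

definition vs :: "('v,'a) bquiver \<Rightarrow> ('v,'a) str \<Rightarrow> 'v set" where
  "vs G \<sigma> = insert (fst \<sigma>) (ltgt G ` set (snd \<sigma>))"

lemma vs_inv: "chain G w B \<Longrightarrow> vs G (inv_str G (w, B)) = vs G (w, B)"
proof -
  have "chain G w B \<Longrightarrow> insert (str_end G (w, B)) (lsrc G ` set B) = insert w (ltgt G ` set B)" for w B
  proof (induction B arbitrary: w)
    case Nil then show ?case by simp
  next
    case (Cons l B)
    then show ?case by auto
  qed
  then show "chain G w B \<Longrightarrow> ?thesis"
    by (simp add: vs_def inv_str_simp set_rl image_image)
qed

lemma is_string_prefix: "is_string G (v, A @ B) \<Longrightarrow> is_string G (v, A)"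
  by (simp add: is_string_chain chain_append)

lemma chain_vs: "wf_bquiver G \<Longrightarrow> v \<in> verts G \<Longrightarrow> chain G v ls \<Longrightarrow> vs G (v, ls) \<subseteq> verts G"
proof (induction ls arbitrary: v)
  case Nil then show ?case by (simp add: vs_def)
next
  case (Cons l ls)
  then have "ltgt G l \<in> verts G"
    by (cases l) (auto simp: wf_bquiver_def)
  with Cons show ?case by (auto simp: vs_def)
qed

lemma is_string_suffix: "wf_bquiver G \<Longrightarrow> is_string G (v, A @ B) \<Longrightarrow> is_string G (str_end G (v, A), B)"
  by (auto simp: is_string_chain chain_append intro: str_end_verts)

lemma vs_append: "vs G (v, A @ B) = vs G (v, A) \<union> vs G (str_end G (v, A), B)"
  by (auto simp: vs_def str_end_simp)




locale setting =
  fixes Q Qb :: "('v, 'a) bquiver"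
  assumes gQ: "gentle Q" and bl: "is_blossoming Q Qb"
begin

lemma wfQ: "wf_bquiver Q" using gQ by (simp add: gentle_def)
lemma gQb: "gentle Qb" using bl by (simp add: is_blossoming_def)
lemma wfQb: "wf_bquiver Qb" using gQb by (simp add: gentle_def)
lemma vQ: "verts Q \<subseteq> verts Qb" and aQ: "arrs Q \<subseteq> arrs Qb"
  using bl by (auto simp: is_blossoming_def)
lemma srcQ: "\<alpha> \<in> arrs Q \<Longrightarrow> src Qb \<alpha> = src Q \<alpha>" and tgtQ: "\<alpha> \<in> arrs Q \<Longrightarrow> tgt Qb \<alpha> = tgt Q \<alpha>"
  using bl by (auto simp: is_blossoming_def)
lemma relsQ: "\<alpha> \<in> arrs Q \<Longrightarrow> \<beta> \<in> arrs Q \<Longrightarrow> (\<alpha>, \<beta>) \<in> rels Qb \<longleftrightarrow> (\<alpha>, \<beta>) \<in> rels Q"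
  using bl by (auto simp: is_blossoming_def)
lemma arrQ_endpoints: "\<alpha> \<in> arrs Q \<Longrightarrow> src Q \<alpha> \<in> verts Q \<and> tgt Q \<alpha> \<in> verts Q"
  using wfQ by (auto simp: wf_bquiver_def)
lemma arr_in_Q: "\<alpha> \<in> arrs Qb \<Longrightarrow> src Qb \<alpha> \<in> verts Q \<Longrightarrow> tgt Qb \<alpha> \<in> verts Q \<Longrightarrow> \<alpha> \<in> arrs Q"
  using bl by (auto simp: is_blossoming_def)
lemma arr_not_Q: "\<alpha> \<in> arrs Qb \<Longrightarrow> \<alpha> \<notin> arrs Q \<Longrightarrow> (src Qb \<alpha> \<in> verts Q) \<noteq> (tgt Qb \<alpha> \<in> verts Q)"
  using bl by (auto simp: is_blossoming_def)

lemma lsrcQ: "fst l \<in> arrs Q \<Longrightarrow> lsrc Qb l = lsrc Q l" and ltgtQ: "fst l \<in> arrs Q \<Longrightarrow> ltgt Qb l = ltgt Q l"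
  by (cases l; simp add: srcQ tgtQ)+

lemma lcompatQ: "fst l \<in> arrs Q \<Longrightarrow> fst l' \<in> arrs Q \<Longrightarrow> lcompat Qb l l' \<longleftrightarrow> lcompat Q l l'"
  by (simp add: lcompat_def relsQ)

lemma chain_Q_Qb: "chain Q v ls \<Longrightarrow> chain Qb v ls \<and> str_end Qb (v, ls) = str_end Q (v, ls) \<and> vs Qb (v, ls) = vs Q (v, ls)"
proof (induction ls arbitrary: v)
  case Nil then show ?case by (simp add: vs_def)
next
  case (Cons l ls)
  have c: "fst l \<in> arrs Q" "lsrc Q l = v" "chain Q (ltgt Q l) ls" "ls \<noteq> [] \<longrightarrow> lcompat Q l (hd ls)"
    using Cons.prems by simp_all
  have IH: "chain Qb (ltgt Q l) ls \<and> str_end Qb (ltgt Q l, ls) = str_end Q (ltgt Q l, ls) \<and> vs Qb (ltgt Q l, ls) = vs Q (ltgt Q l, ls)"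
    using Cons.IH[OF c(3)] .
  have h: "ls \<noteq> [] \<Longrightarrow> fst (hd ls) \<in> arrs Q" using c(3) by (cases ls) auto
  show ?case using c IH h aQ lcompatQ lsrcQ ltgtQ by (auto simp: vs_def)
qed

lemma chain_Qb_Q: "chain Qb v ls \<Longrightarrow> vs Qb (v, ls) \<subseteq> verts Q \<Longrightarrow> chain Q v ls"
proof (induction ls arbitrary: v)
  case Nil then show ?case by simp
next
  case (Cons l ls)
  have c: "fst l \<in> arrs Qb" "lsrc Qb l = v" "chain Qb (ltgt Qb l) ls" "ls \<noteq> [] \<longrightarrow> lcompat Qb l (hd ls)"
    using Cons.prems by simp_all
  have vv: "v \<in> verts Q" "ltgt Qb l \<in> verts Q" "vs Qb (ltgt Qb l, ls) \<subseteq> verts Q"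
    using Cons.prems(2) by (auto simp: vs_def)
  have a: "fst l \<in> arrs Q"
  proof (cases l)
    case (Pair \<alpha> d)
    then show ?thesis using c(1,2) vv(1,2) arr_in_Q by (cases d) auto
  qed
  have IH: "chain Q (ltgt Qb l) ls" using Cons.IH[OF c(3) vv(3)] .
  have h: "ls \<noteq> [] \<Longrightarrow> fst (hd ls) \<in> arrs Q" using IH by (cases ls) auto
  show ?case using c IH h a lcompatQ lsrcQ ltgtQ by auto
qed

lemma string_Q_Qb: "is_string Q (v, ls) \<Longrightarrow> is_string Qb (v, ls)"
  using chain_Q_Qb vQ by (auto simp: is_string_chain)

lemma string_Qb_Q: "is_string Qb (v, ls) \<Longrightarrow> vs Qb (v, ls) \<subseteq> verts Q \<Longrightarrow> is_string Q (v, ls)"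
  using chain_Qb_Q by (auto simp: is_string_chain vs_def)

lemma vs_string: "is_string Q (v, ls) \<Longrightarrow> vs Q (v, ls) \<subseteq> verts Q"
  using chain_vs[OF wfQ] by (auto simp: is_string_chain)

lemma inv_Q_Qb: "chain Q v ls \<Longrightarrow> inv_str Qb (v, ls) = inv_str Q (v, ls)"
  using chain_Q_Qb by (simp add: inv_str_simp)

end



definition BF :: "('v,'a) bquiver \<Rightarrow> ('v,'a) str \<Rightarrow> ('v,'a) str set" where
  "BF G \<sigma> = {(str_end G (fst \<sigma>, A), B) | A B C. snd \<sigma> = A @ B @ C \<and> (A = [] \<or> snd (last A)) \<and> (C = [] \<or> \<not> snd (hd C))}"

definition XW :: "('v,'a) bquiver \<Rightarrow> ('v,'a) bquiver \<Rightarrow> ('v,'a) str \<Rightarrow> ('v,'a) str set" where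
  "XW Q G \<sigma> = {(str_end G (fst \<sigma>, A), B) | A B C. snd \<sigma> = A @ B @ C \<and> A \<noteq> [] \<and> snd (last A) \<and> C \<noteq> [] \<and> \<not> snd (hd C)
      \<and> vs G (str_end G (fst \<sigma>, A), B) \<subseteq> verts Q}"

lemma last_take_nth: "0 < i \<Longrightarrow> i \<le> length ls \<Longrightarrow> last (take i ls) = ls ! (i - 1)"
proof -
  assume a: "0 < i" "i \<le> length ls"
  then have "take i ls \<noteq> []" by auto
  then show ?thesis using a by (simp add: last_conv_nth)
qed

lemma hd_drop_nth: "j < length ls \<Longrightarrow> hd (drop j ls) = ls ! j"
  by (simp add: hd_drop_conv_nth)

lemma BF_index: "{(vert_at G \<sigma> i, take (j - i) (drop i (snd \<sigma>))) | i j.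
        i \<le> j \<and> j \<le> length (snd \<sigma>)
      \<and> (i = 0 \<or> snd (snd \<sigma> ! (i - 1)))
      \<and> (j = length (snd \<sigma>) \<or> \<not> snd (snd \<sigma> ! j))} = BF G \<sigma>"
proof (cases \<sigma>)
  case (Pair v ls)
  show ?thesis unfolding Pair BF_def fst_conv snd_conv
  proof (intro equalityI subsetI)
    fix x assume "x \<in> {(vert_at G (v, ls) i, take (j - i) (drop i ls)) | i j. i \<le> j \<and> j \<le> length ls \<and> (i = 0 \<or> snd (ls ! (i - 1))) \<and> (j = length ls \<or> \<not> snd (ls ! j))}"
    then obtain i j where x: "x = (vert_at G (v, ls) i, take (j - i) (drop i ls))" and ij: "i \<le> j" "j \<le> length ls"
      "i = 0 \<or> snd (ls ! (i - 1))" "j = length ls \<or> \<not> snd (ls ! j)" by blast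
    let ?A = "take i ls" and ?B = "take (j - i) (drop i ls)" and ?C = "drop j ls"
    have "ls = ?A @ ?B @ ?C"
      by (metis append.assoc append_take_drop_id ij(1) le_add_diff_inverse take_add)
    moreover have "?A = [] \<or> snd (last ?A)" using ij by (auto simp: last_take_nth)
    moreover have "?C = [] \<or> \<not> snd (hd ?C)" using ij by (auto simp: hd_drop_nth)
    moreover have "x = (str_end G (v, ?A), ?B)" using x ij by (simp add: vert_at_take)
    ultimately show "x \<in> {(str_end G (v, A), B) |A B C. ls = A @ B @ C \<and> (A = [] \<or> snd (last A)) \<and> (C = [] \<or> \<not> snd (hd C))}"
      by blast
  next
    fix x assume "x \<in> {(str_end G (v, A), B) |A B C. ls = A @ B @ C \<and> (A = [] \<or> snd (last A)) \<and> (C = [] \<or> \<not> snd (hd C))}"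
    then obtain A B C where x: "x = (str_end G (v, A), B)" and d: "ls = A @ B @ C" "A = [] \<or> snd (last A)" "C = [] \<or> \<not> snd (hd C)"
      by blast
    let ?i = "length A" and ?j = "length A + length B"
    have "x = (vert_at G (v, ls) ?i, take (?j - ?i) (drop ?i ls))" using x d by (simp add: vert_at_take)
    moreover have "?i = 0 \<or> snd (ls ! (?i - 1))" using d
      by (cases "A = []") (auto simp: nth_append last_conv_nth)
    moreover have "?j = length ls \<or> \<not> snd (ls ! ?j)" using d
      by (cases "C = []") (auto simp: nth_append hd_conv_nth)
    moreover have "?i \<le> ?j" "?j \<le> length ls" using d by auto
    ultimately show "x \<in> {(vert_at G (v, ls) i, take (j - i) (drop i ls)) | i j. i \<le> j \<and> j \<le> length ls \<and> (i = 0 \<or> snd (ls ! (i - 1))) \<and> (j = length ls \<or> \<not> snd (ls ! j))}"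
      by blast
  qed
qed

lemma sigma_bot_str_BF: "sigma_bot_str G \<sigma> = sym_cl G (BF G \<sigma>)"
  unfolding sigma_bot_str_def BF_index ..

lemma vs_index: "i \<le> j \<Longrightarrow> j \<le> length ls \<Longrightarrow>
   vs G (vert_at G (v, ls) i, take (j - i) (drop i ls)) = {vert_at G (v, ls) k | k. i \<le> k \<and> k \<le> j}"
proof -
  assume ij: "i \<le> j" "j \<le> length ls"
  have "ltgt G ` set (take (j - i) (drop i ls)) = {vert_at G (v, ls) k | k. i < k \<and> k \<le> j}"
  proof (intro equalityI subsetI)
    fix y assume "y \<in> ltgt G ` set (take (j - i) (drop i ls))"
    then obtain t where t: "t < j - i" "y = ltgt G (ls ! (i + t))"
      using ij by (auto simp: in_set_conv_nth)
    then have "y = vert_at G (v, ls) (i + t + 1)" by (simp add: vert_at_def)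
    then show "y \<in> {vert_at G (v, ls) k | k. i < k \<and> k \<le> j}" using t by (intro CollectI exI[of _ "i + t + 1"]) auto
  next
    fix y assume "y \<in> {vert_at G (v, ls) k | k. i < k \<and> k \<le> j}"
    then obtain k where k: "i < k" "k \<le> j" "y = vert_at G (v, ls) k" by blast
    then have "y = ltgt G (take (j - i) (drop i ls) ! (k - 1 - i))" using ij by (simp add: vert_at_def)
    moreover have "k - 1 - i < length (take (j - i) (drop i ls))" using k ij by simp
    ultimately show "y \<in> ltgt G ` set (take (j - i) (drop i ls))" by (metis image_eqI nth_mem)
  qed
  then show ?thesis unfolding vs_def fst_conv snd_conv
    using ij by (auto simp: le_less)
qed

lemma XW_index: "{(vert_at Qb \<omega> i, take (j - i) (drop i (snd \<omega>))) | i j.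
        0 < i \<and> i \<le> j \<and> j < length (snd \<omega>)
      \<and> (\<forall>k. i \<le> k \<and> k \<le> j \<longrightarrow> vert_at Qb \<omega> k \<in> verts Q)
      \<and> snd (snd \<omega> ! (i - 1)) \<and> \<not> snd (snd \<omega> ! j)} = XW Q Qb \<omega>"
proof (cases \<omega>)
  case (Pair v ls)
  show ?thesis unfolding Pair XW_def fst_conv snd_conv
  proof (intro equalityI subsetI)
    fix x assume "x \<in> {(vert_at Qb (v, ls) i, take (j - i) (drop i ls)) | i j. 0 < i \<and> i \<le> j \<and> j < length ls
      \<and> (\<forall>k. i \<le> k \<and> k \<le> j \<longrightarrow> vert_at Qb (v, ls) k \<in> verts Q) \<and> snd (ls ! (i - 1)) \<and> \<not> snd (ls ! j)}"
    then obtain i j where x: "x = (vert_at Qb (v, ls) i, take (j - i) (drop i ls))" and ij: "0 < i" "i \<le> j" "j < length ls"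
      "\<forall>k. i \<le> k \<and> k \<le> j \<longrightarrow> vert_at Qb (v, ls) k \<in> verts Q" "snd (ls ! (i - 1))" "\<not> snd (ls ! j)" by blast
    let ?A = "take i ls" and ?B = "take (j - i) (drop i ls)" and ?C = "drop j ls"
    have "ls = ?A @ ?B @ ?C"
      by (metis append.assoc append_take_drop_id ij(2) le_add_diff_inverse take_add)
    moreover have "?A \<noteq> [] \<and> snd (last ?A)" using ij by (auto simp: last_take_nth)
    moreover have "?C \<noteq> [] \<and> \<not> snd (hd ?C)" using ij by (auto simp: hd_drop_nth)
    moreover have "x = (str_end Qb (v, ?A), ?B)" using x ij by (simp add: vert_at_take)
    moreover have "vs Qb (str_end Qb (v, ?A), ?B) \<subseteq> verts Q"
      using vs_index[of i j ls Qb v] ij by (auto simp: vert_at_take)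
    ultimately show "x \<in> {(str_end Qb (v, A), B) |A B C. ls = A @ B @ C \<and> A \<noteq> [] \<and> snd (last A) \<and> C \<noteq> [] \<and> \<not> snd (hd C)
      \<and> vs Qb (str_end Qb (v, A), B) \<subseteq> verts Q}"
      by blast
  next
    fix x assume "x \<in> {(str_end Qb (v, A), B) |A B C. ls = A @ B @ C \<and> A \<noteq> [] \<and> snd (last A) \<and> C \<noteq> [] \<and> \<not> snd (hd C)
      \<and> vs Qb (str_end Qb (v, A), B) \<subseteq> verts Q}"
    then obtain A B C where x: "x = (str_end Qb (v, A), B)" and d: "ls = A @ B @ C" "A \<noteq> []" "snd (last A)" "C \<noteq> []" "\<not> snd (hd C)"
      "vs Qb (str_end Qb (v, A), B) \<subseteq> verts Q"
      by blast
    let ?i = "length A" and ?j = "length A + length B"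
    have x2: "x = (vert_at Qb (v, ls) ?i, take (?j - ?i) (drop ?i ls))" using x d by (simp add: vert_at_take)
    moreover have "snd (ls ! (?i - 1))" using d
      by (auto simp: nth_append last_conv_nth)
    moreover have "\<not> snd (ls ! ?j)" using d
      by (auto simp: nth_append hd_conv_nth)
    moreover have "0 < ?i" "?i \<le> ?j" "?j < length ls" using d by auto
    moreover have "\<forall>k. ?i \<le> k \<and> k \<le> ?j \<longrightarrow> vert_at Qb (v, ls) k \<in> verts Q"
    proof -
      have "vs Qb (vert_at Qb (v, ls) ?i, take (?j - ?i) (drop ?i ls)) \<subseteq> verts Q" using x x2 d(6) by simp
      then show ?thesis using vs_index[of ?i ?j ls Qb v] d by auto
    qed
    ultimately show "x \<in> {(vert_at Qb (v, ls) i, take (j - i) (drop i ls)) | i j. 0 < i \<and> i \<le> j \<and> j < length ls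
      \<and> (\<forall>k. i \<le> k \<and> k \<le> j \<longrightarrow> vert_at Qb (v, ls) k \<in> verts Q) \<and> snd (ls ! (i - 1)) \<and> \<not> snd (ls ! j)}"
      by blast
  qed
qed

lemma sigma_bot_walk_XW: "sigma_bot_walk Q Qb \<omega> = sym_cl Qb (XW Q Qb \<omega>)"
  unfolding sigma_bot_walk_def XW_index ..




lemma XW_inv: "chain G v ls \<Longrightarrow> \<tau> \<in> XW Q G (v, ls) \<Longrightarrow> inv_str G \<tau> \<in> XW Q G (inv_str G (v, ls))"
proof -
  assume ch: "chain G v ls" and t: "\<tau> \<in> XW Q G (v, ls)"
  then obtain A B C where tau: "\<tau> = (str_end G (v, A), B)" and d: "ls = A @ B @ C" "A \<noteq> []" "snd (last A)" "C \<noteq> []" "\<not> snd (hd C)"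
      "vs G (str_end G (v, A), B) \<subseteq> verts Q"
    unfolding XW_def by auto
  let ?w = "str_end G (v, A @ B)"
  have chA: "chain G (str_end G (v, A)) B" and chC: "chain G ?w C"
    using ch d(1) by (simp_all add: chain_append str_end_append del: append_assoc)
  have e1: "str_end G (v, ls) = str_end G (?w, C)" using d(1) by (simp add: str_end_append del: append_assoc)
  have e2: "str_end G (str_end G (?w, C), rl C) = ?w" using chain_rl[OF chC] by blast
  have inv1: "inv_str G (v, ls) = (str_end G (v, ls), rl C @ rl B @ rl A)" using d(1) by (simp add: inv_str_simp)
  have inv2: "inv_str G \<tau> = (str_end G (str_end G (v, ls), rl C), rl B)"
    unfolding tau inv_str_simp e1 e2 by (simp add: str_end_append)
  have "vs G (inv_str G \<tau>) \<subseteq> verts Q" using vs_inv[OF chA] d(6) tau by simp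
  moreover have "rl C \<noteq> [] \<and> snd (last (rl C))" using d(4,5) by (simp add: last_rl)
  moreover have "rl A \<noteq> [] \<and> \<not> snd (hd (rl A))" using d(2,3) by (simp add: hd_rl)
  ultimately show ?thesis unfolding inv1 XW_def fst_conv snd_conv inv2 by blast
qed

lemma XW_factor: "\<tau> \<in> XW Q G \<omega> \<Longrightarrow> \<rho> \<in> BF G \<tau> \<Longrightarrow> \<rho> \<in> XW Q G \<omega>"
proof -
  assume t: "\<tau> \<in> XW Q G \<omega>" and r: "\<rho> \<in> BF G \<tau>"
  obtain A B C where tau: "\<tau> = (str_end G (fst \<omega>, A), B)" and d: "snd \<omega> = A @ B @ C" "A \<noteq> []" "snd (last A)" "C \<noteq> []" "\<not> snd (hd C)"
      "vs G (str_end G (fst \<omega>, A), B) \<subseteq> verts Q"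
    using t unfolding XW_def by auto
  obtain A2 B2 C2 where rho: "\<rho> = (str_end G (fst \<tau>, A2), B2)" and d2: "snd \<tau> = A2 @ B2 @ C2" "A2 = [] \<or> snd (last A2)" "C2 = [] \<or> \<not> snd (hd C2)"
    using r unfolding BF_def by auto
  have B: "B = A2 @ B2 @ C2" using d2 tau by simp
  have "snd \<omega> = (A @ A2) @ B2 @ (C2 @ C)" using d B by simp
  moreover have "A @ A2 \<noteq> [] \<and> snd (last (A @ A2))" using d d2 by (cases "A2 = []") auto
  moreover have "C2 @ C \<noteq> [] \<and> \<not> snd (hd (C2 @ C))" using d d2 by (auto simp: hd_append)
  moreover have "\<rho> = (str_end G (fst \<omega>, A @ A2), B2)" using rho tau by (simp add: str_end_append)
  moreover have "vs G (str_end G (fst \<omega>, A @ A2), B2) \<subseteq> verts Q"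
  proof -
    have "vs G (str_end G (fst \<omega>, A), B) = vs G (str_end G (fst \<omega>, A), A2) \<union> vs G (str_end G (fst \<omega>, A @ A2), B2 @ C2)"
      unfolding B vs_append by (simp add: str_end_append)
    moreover have "vs G (str_end G (fst \<omega>, A @ A2), B2 @ C2) \<supseteq> vs G (str_end G (fst \<omega>, A @ A2), B2)"
      unfolding vs_append by blast
    ultimately show ?thesis using d(6) by blast
  qed
  ultimately show ?thesis unfolding XW_def by blast
qed

lemma clos_join_clos:
  assumes "\<tau> \<in> clos G X"
  shows "\<rho> \<in> clos G X \<Longrightarrow> fst l \<in> arrs G \<Longrightarrow> lsrc G l = str_end G \<rho> \<Longrightarrow> ltgt G l = fst \<tau> \<Longrightarrow>
         is_string G (fst \<rho>, snd \<rho> @ [l] @ snd \<tau>) \<Longrightarrow> (fst \<rho>, snd \<rho> @ [l] @ snd \<tau>) \<in> clos G X"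
  using assms
proof (induction arbitrary: \<rho> l rule: clos.induct)
  case (base \<sigma>)
  then show ?case by (intro clos.join) auto
next
  case (join \<rho>' \<tau>' l')
  have s1: "is_string G (fst \<rho>, snd \<rho> @ [l] @ snd \<rho>')"
    using join.prems(5) is_string_prefix[of G "fst \<rho>" "snd \<rho> @ [l] @ snd \<rho>'" "[l'] @ snd \<tau>'"] by simp
  have IH: "(fst \<rho>, snd \<rho> @ [l] @ snd \<rho>') \<in> clos G X"
    using join.IH[OF join.prems(1,2,3)] join.prems(4) s1 by simp
  have e: "lsrc G l' = str_end G (fst \<rho>, snd \<rho> @ [l] @ snd \<rho>')"
  proof -
    have "str_end G (fst \<rho>, snd \<rho> @ [l] @ snd \<rho>') = str_end G (ltgt G l, snd \<rho>')"
      by (simp add: str_end_append del: append_assoc)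
    also have "\<dots> = str_end G \<rho>'" using join.prems(4) by (cases \<rho>') simp
    finally show ?thesis using join.hyps(4) by simp
  qed
  have "(fst (fst \<rho>, snd \<rho> @ [l] @ snd \<rho>'), snd (fst \<rho>, snd \<rho> @ [l] @ snd \<rho>') @ [l'] @ snd \<tau>') \<in> clos G X"
    by (rule clos.join[OF IH join.hyps(2,3) e join.hyps(5)]) (use join.prems(5) in simp)
  then show ?case by simp
qed

lemma clos_closed_join: "clos G X = X \<Longrightarrow> \<rho> \<in> X \<Longrightarrow> \<tau> \<in> X \<Longrightarrow> fst l \<in> arrs G \<Longrightarrow> lsrc G l = str_end G \<rho> \<Longrightarrow>
   ltgt G l = fst \<tau> \<Longrightarrow> is_string G (fst \<rho>, snd \<rho> @ [l] @ snd \<tau>) \<Longrightarrow> (fst \<rho>, snd \<rho> @ [l] @ snd \<tau>) \<in> X"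
  by (metis clos.base clos.join)




lemma card2_ex_not: "card {x\<in>A. P x} = 2 \<Longrightarrow> card {x\<in>A. P x \<and> R x} \<le> 1 \<Longrightarrow> \<exists>x\<in>A. P x \<and> \<not> R x"
proof (rule ccontr)
  assume c: "card {x\<in>A. P x} = 2" "card {x\<in>A. P x \<and> R x} \<le> 1" "\<not> (\<exists>x\<in>A. P x \<and> \<not> R x)"
  then have "{x\<in>A. P x \<and> R x} = {x\<in>A. P x}" by blast
  with c show False by simp
qed

lemma card2_ex_ne: "card {x\<in>A. P x} = 2 \<Longrightarrow> \<exists>x\<in>A. P x \<and> x \<noteq> a"
proof (rule ccontr)
  assume c: "card {x\<in>A. P x} = 2" "\<not> (\<exists>x\<in>A. P x \<and> x \<noteq> a)"
  then have "{x\<in>A. P x} \<subseteq> {a}" by blast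
  then have "card {x\<in>A. P x} \<le> card {a}" by (intro card_mono) auto
  then have "card {x\<in>A. P x} \<le> 1" by simp
  with c show False by simp
qed

context setting
begin

lemma deg2: "v \<in> verts Q \<Longrightarrow> card {\<alpha>\<in>arrs Qb. tgt Qb \<alpha> = v} = 2 \<and> card {\<alpha>\<in>arrs Qb. src Qb \<alpha> = v} = 2"
  using bl by (simp add: is_blossoming_def)

lemma gcard: "\<beta> \<in> arrs Qb \<Longrightarrow>
          card {\<alpha>\<in>arrs Qb. tgt Qb \<alpha> = src Qb \<beta> \<and> (\<alpha>, \<beta>) \<in> rels Qb} \<le> 1
        \<and> card {\<gamma>\<in>arrs Qb. src Qb \<gamma> = tgt Qb \<beta> \<and> (\<beta>, \<gamma>) \<in> rels Qb} \<le> 1"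
  using gQb by (simp add: gentle_def)

lemma ext_end: "is_string Qb (u, L) \<Longrightarrow> str_end Qb (u, L) \<in> verts Q \<Longrightarrow> \<exists>l. snd l = d \<and> is_string Qb (u, L @ [l])"
proof -
  assume s: "is_string Qb (u, L)" and w: "str_end Qb (u, L) \<in> verts Q"
  let ?w = "str_end Qb (u, L)"
  have D: "card {\<alpha>\<in>arrs Qb. tgt Qb \<alpha> = ?w} = 2" "card {\<alpha>\<in>arrs Qb. src Qb \<alpha> = ?w} = 2" using deg2[OF w] by auto
  have "\<exists>l. snd l = d \<and> fst l \<in> arrs Qb \<and> lsrc Qb l = ?w \<and> (L \<noteq> [] \<longrightarrow> lcompat Qb (last L) l)"
  proof (cases "L = []")
    case True
    then show ?thesis
    proof (cases d)
      case True
      from card2_ex_ne[OF D(2)] obtain x where "x \<in> arrs Qb" "src Qb x = ?w" by blast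
      then show ?thesis using True \<open>L = []\<close> by (intro exI[of _ "(x, True)"]) auto
    next
      case False
      from card2_ex_ne[OF D(1)] obtain x where "x \<in> arrs Qb" "tgt Qb x = ?w" by blast
      then show ?thesis using False \<open>L = []\<close> by (intro exI[of _ "(x, False)"]) auto
    qed
  next
    case False
    obtain a e where ae: "last L = (a, e)" by (cases "last L")
    have a: "a \<in> arrs Qb" using s False ae
      by (metis append_butlast_last_id chain.simps(2) chain_append fst_conv is_string_chain)
    have wl: "?w = ltgt Qb (a, e)" using False ae by (simp add: str_end_simp)
    have G: "card {\<alpha>\<in>arrs Qb. tgt Qb \<alpha> = src Qb a \<and> (\<alpha>, a) \<in> rels Qb} \<le> 1"
         "card {\<gamma>\<in>arrs Qb. src Qb \<gamma> = tgt Qb a \<and> (a, \<gamma>) \<in> rels Qb} \<le> 1" using gcard[OF a] by auto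
    show ?thesis
    proof (cases e; cases d)
      assume e: e and d: d
      have "card {\<gamma>\<in>arrs Qb. src Qb \<gamma> = tgt Qb a} = 2" using D e wl by simp
      from card2_ex_not[OF this G(2)] obtain x where "x \<in> arrs Qb" "src Qb x = tgt Qb a" "(a, x) \<notin> rels Qb" by blast
      then show ?thesis using e d wl ae by (intro exI[of _ "(x, True)"]) (auto simp: lcompat_def)
    next
      assume e: e and d: "\<not> d"
      from card2_ex_ne[OF D(1), of a] obtain x where "x \<in> arrs Qb" "tgt Qb x = ?w" "x \<noteq> a" by blast
      then show ?thesis using e d wl ae by (intro exI[of _ "(x, False)"]) (auto simp: lcompat_def)
    next
      assume e: "\<not> e" and d: d
      from card2_ex_ne[OF D(2), of a] obtain x where "x \<in> arrs Qb" "src Qb x = ?w" "x \<noteq> a" by blast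
      then show ?thesis using e d wl ae by (intro exI[of _ "(x, True)"]) (auto simp: lcompat_def)
    next
      assume e: "\<not> e" and d: "\<not> d"
      have "card {\<alpha>\<in>arrs Qb. tgt Qb \<alpha> = src Qb a} = 2" using D e wl by simp
      from card2_ex_not[OF this G(1)] obtain x where "x \<in> arrs Qb" "tgt Qb x = src Qb a" "(x, a) \<notin> rels Qb" by blast
      then show ?thesis using e d wl ae by (intro exI[of _ "(x, False)"]) (auto simp: lcompat_def)
    qed
  qed
  then obtain l where l: "snd l = d" "fst l \<in> arrs Qb" "lsrc Qb l = ?w" "L \<noteq> [] \<longrightarrow> lcompat Qb (last L) l" by blast
  have "is_string Qb (u, L @ [l])" using s l by (simp add: is_string_chain chain_append)
  then show ?thesis using l(1) by blast
qed

lemma ext_front: "is_string Qb (u, L) \<Longrightarrow> u \<in> verts Q \<Longrightarrow> \<exists>l. snd l = d \<and> is_string Qb (lsrc Qb l, l # L)"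
proof -
  assume s: "is_string Qb (u, L)" and u: "u \<in> verts Q"
  have ch: "chain Qb u L" using s by (simp add: is_string_chain)
  have si: "is_string Qb (str_end Qb (u, L), rl L)" using is_string_inv[OF wfQb s] by (simp add: inv_str_simp)
  have e: "str_end Qb (str_end Qb (u, L), rl L) = u" using chain_rl[OF ch] by blast
  obtain l' where l': "snd l' = (\<not> d)" "is_string Qb (str_end Qb (u, L), rl L @ [l'])"
    using ext_end[OF si, of "\<not> d"] e u by auto
  have "is_string Qb (inv_str Qb (str_end Qb (u, L), rl L @ [l']))" by (rule is_string_inv[OF wfQb l'(2)])
  moreover have "inv_str Qb (str_end Qb (u, L), rl L @ [l']) = (lsrc Qb (flip l'), flip l' # L)"
    by (simp add: inv_str_simp str_end_append)
  ultimately show ?thesis using l'(1) by (intro exI[of _ "flip l'"]) simp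
qed

lemma noext_end: "is_string Qb (u, L) \<Longrightarrow> L \<noteq> [] \<Longrightarrow> str_end Qb (u, L) \<notin> verts Q \<Longrightarrow> \<not> is_string Qb (u, L @ [l])"
proof
  assume s: "is_string Qb (u, L)" and L: "L \<noteq> []" and b: "str_end Qb (u, L) \<notin> verts Q" and s2: "is_string Qb (u, L @ [l])"
  let ?b = "str_end Qb (u, L)"
  have bv: "?b \<in> verts Qb" using s str_end_verts[OF wfQb] by (auto simp: is_string_chain)
  obtain a e where ae: "last L = (a, e)" by (cases "last L")
  have a: "a \<in> arrs Qb" using s L ae
    by (metis append_butlast_last_id chain.simps(2) chain_append fst_conv is_string_chain)
  have wl: "?b = ltgt Qb (a, e)" using L ae by (simp add: str_end_simp)
  have c: "fst l \<in> arrs Qb" "lsrc Qb l = ?b" "lcompat Qb (a, e) l"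
    using s2 L ae by (auto simp: is_string_chain chain_append)
  have one: "card {\<alpha>\<in>arrs Qb. src Qb \<alpha> = ?b \<or> tgt Qb \<alpha> = ?b} = 1" using bl bv b by (simp add: is_blossoming_def)
  have ina: "a \<in> {\<alpha>\<in>arrs Qb. src Qb \<alpha> = ?b \<or> tgt Qb \<alpha> = ?b}" using a wl by (cases e) auto
  have inx: "fst l \<in> {\<alpha>\<in>arrs Qb. src Qb \<alpha> = ?b \<or> tgt Qb \<alpha> = ?b}" using c by (cases l; cases "snd l") auto
  have xa: "fst l = a" using one ina inx by (metis card_1_singletonE singletonD)
  then have sl: "snd l = e" using c(3) by (auto simp: lcompat_def)
  have st: "src Qb a = ?b \<and> tgt Qb a = ?b" using c(2) wl xa sl by (cases l; cases e) auto
  show False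
  proof (cases "a \<in> arrs Q")
    case True
    then show ?thesis using st arrQ_endpoints srcQ b by metis
  next
    case False
    then show ?thesis using arr_not_Q[OF a] st by simp
  qed
qed

lemma noext_front: "is_string Qb (u, L) \<Longrightarrow> L \<noteq> [] \<Longrightarrow> u \<notin> verts Q \<Longrightarrow> \<not> is_string Qb (lsrc Qb l, l # L)"
proof
  assume s: "is_string Qb (u, L)" and L: "L \<noteq> []" and u: "u \<notin> verts Q" and s2: "is_string Qb (lsrc Qb l, l # L)"
  have ch: "chain Qb u L" using s by (simp add: is_string_chain)
  have lu: "ltgt Qb l = u" using s s2 L by (cases L) (auto simp: is_string_chain)
  have si: "is_string Qb (str_end Qb (u, L), rl L)" using is_string_inv[OF wfQb s] by (simp add: inv_str_simp)
  have e: "str_end Qb (str_end Qb (u, L), rl L) = u" using chain_rl[OF ch] by blast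
  have "is_string Qb (inv_str Qb (lsrc Qb l, l # L))" by (rule is_string_inv[OF wfQb s2])
  then have "is_string Qb (str_end Qb (u, L), rl L @ [flip l])" using lu by (simp add: inv_str_simp)
  with noext_end[OF si] L e u show False by simp
qed

end



lemma chain_nth: "chain G v ls \<Longrightarrow> Suc i < length ls \<Longrightarrow> lcompat G (ls ! i) (ls ! Suc i) \<and> ltgt G (ls ! i) = lsrc G (ls ! Suc i)"
proof (induction ls arbitrary: v i)
  case Nil then show ?case by simp
next
  case (Cons l ls)
  show ?case
  proof (cases i)
    case 0
    then show ?thesis using Cons.prems by (cases ls) auto
  next
    case (Suc j)
    then show ?thesis using Cons.IH[of "ltgt G l" j] Cons.prems by simp
  qed
qed

lemma chain_arrs: "chain G v ls \<Longrightarrow> l \<in> set ls \<Longrightarrow> fst l \<in> arrs G"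
  by (induction ls arbitrary: v) auto

lemma direct_chain_bound:
  assumes adm: "\<forall>p. is_path G p \<and> length p = m \<longrightarrow> (\<exists>i. Suc i < length p \<and> (p ! i, p ! Suc i) \<in> rels G)"
    and ch: "chain G v P" and dir: "\<forall>l\<in>set P. snd l"
  shows "length P < m"
proof (rule ccontr)
  assume "\<not> length P < m"
  then have len: "m \<le> length P" by simp
  let ?p = "take m (map fst P)"
  have "is_path G ?p"
    unfolding is_path_def
  proof (intro conjI allI impI)
    have "set (map fst P) \<subseteq> arrs G" using chain_arrs[OF ch] by auto
    then show "set ?p \<subseteq> arrs G" using set_take_subset by fastforce
    fix i assume i: "Suc i < length ?p"
    then have "Suc i < length P" by simp
    from chain_nth[OF ch this] have "ltgt G (P ! i) = lsrc G (P ! Suc i)" by blast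
    moreover have "snd (P ! i)" "snd (P ! Suc i)" using dir i by (auto simp: nth_mem)
    ultimately show "tgt G (?p ! i) = src G (?p ! Suc i)" using i
      by (cases "P ! i"; cases "P ! Suc i") auto
  qed
  moreover have "length ?p = m" using len by simp
  ultimately obtain i where i: "Suc i < length ?p" "(?p ! i, ?p ! Suc i) \<in> rels G" using adm by blast
  then have "Suc i < length P" by simp
  from chain_nth[OF ch this] have "lcompat G (P ! i) (P ! Suc i)" by blast
  moreover have "snd (P ! i)" "snd (P ! Suc i)" using dir i by (auto simp: nth_mem)
  ultimately show False using i by (auto simp: lcompat_def)
qed

locale setting2 = setting +
  assumes frc: "finite_reduced_complex Qb"
begin

lemma admQb: "\<exists>m. \<forall>p. is_path Qb p \<and> length p = m \<longrightarrow> (\<exists>i. Suc i < length p \<and> (p ! i, p ! Suc i) \<in> rels Qb)"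
  using gQb by (simp add: gentle_def admissible_def)

lemma walk_bound: "\<exists>N. \<forall>\<omega>. is_walk Qb \<omega> \<longrightarrow> length (snd \<omega>) \<le> N"
proof -
  obtain m where m: "\<forall>p. is_path Qb p \<and> length p = m \<longrightarrow> (\<exists>i. Suc i < length p \<and> (p ! i, p ! Suc i) \<in> rels Qb)"
    using admQb by blast
  let ?F = "{\<omega>. is_walk Qb \<omega> \<and> \<not> straight \<omega>}"
  have fin: "finite ?F" using frc by (simp add: finite_reduced_complex_def)
  define N where "N = max m (Max (insert 0 ((\<lambda>\<omega>. length (snd \<omega>)) ` ?F)))"
  have "length (snd \<omega>) \<le> N" if w: "is_walk Qb \<omega>" for \<omega>
  proof (cases "straight \<omega>")
    case False
    then have "length (snd \<omega>) \<le> Max (insert 0 ((\<lambda>\<omega>. length (snd \<omega>)) ` ?F))"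
      using fin w by (intro Max_ge) auto
    then show ?thesis unfolding N_def by linarith
  next
    case True
    obtain v ls where vls: "\<omega> = (v, ls)" by (cases \<omega>)
    have ch: "chain Qb v ls" and sv: "v \<in> verts Qb" using w vls by (auto simp: is_walk_def is_string_chain)
    show ?thesis
    proof (cases "\<forall>l\<in>set ls. snd l")
      case True
      then have "length ls < m" using direct_chain_bound[OF m ch] by blast
      then show ?thesis unfolding N_def using vls by simp
    next
      case False
      then have inv: "\<forall>l\<in>set ls. \<not> snd l" using \<open>straight \<omega>\<close> vls by (auto simp: straight_def)
      have ch2: "chain Qb (str_end Qb (v, ls)) (rl ls)" using chain_rl[OF ch] by blast
      have "\<forall>l\<in>set (rl ls). snd l" using inv by (auto simp: set_rl)
      then have "length (rl ls) < m" using direct_chain_bound[OF m ch2] by blast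
      then show ?thesis unfolding N_def using vls by simp
    qed
  qed
  then show ?thesis by blast
qed

lemma append_ext: "is_string Qb (u, L) \<Longrightarrow> L \<noteq> [] \<Longrightarrow> \<exists>P. is_string Qb (u, L @ P) \<and> str_end Qb (u, L @ P) \<notin> verts Q"
proof -
  assume s: "is_string Qb (u, L)" and L: "L \<noteq> []"
  obtain m where m: "\<forall>p. is_path Qb p \<and> length p = m \<longrightarrow> (\<exists>i. Suc i < length p \<and> (p ! i, p ! Suc i) \<in> rels Qb)"
    using admQb by blast
  define Pr where "Pr n = (\<exists>P. length P = n \<and> (\<forall>l\<in>set P. snd l) \<and> is_string Qb (u, L @ P))" for n
  have "Pr 0" using s by (simp add: Pr_def)
  moreover have "\<forall>n. Pr n \<longrightarrow> n \<le> m"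
  proof (intro allI impI)
    fix n assume "Pr n"
    then obtain P where P: "length P = n" "\<forall>l\<in>set P. snd l" "is_string Qb (u, L @ P)" by (auto simp: Pr_def)
    then have "chain Qb (str_end Qb (u, L)) P" by (simp add: is_string_chain chain_append)
    from direct_chain_bound[OF m this P(2)] P(1) show "n \<le> m" by simp
  qed
  ultimately obtain n where n: "Pr n" "\<forall>k. Pr k \<longrightarrow> k \<le> n" using Nat.ex_has_greatest_nat[of Pr 0 m] by blast
  then obtain P where P: "length P = n" "\<forall>l\<in>set P. snd l" "is_string Qb (u, L @ P)" by (auto simp: Pr_def)
  have "str_end Qb (u, L @ P) \<notin> verts Q"
  proof
    assume "str_end Qb (u, L @ P) \<in> verts Q"
    from ext_end[OF P(3) this, of True] obtain l where "snd l" "is_string Qb (u, L @ P @ [l])" by auto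
    then have "length (P @ [l]) = Suc n \<and> (\<forall>l\<in>set (P @ [l]). snd l) \<and> is_string Qb (u, L @ (P @ [l]))"
      using P(1,2) by simp
    then have "Pr (Suc n)" unfolding Pr_def by blast
    then have "Suc n \<le> n" using n(2) by blast
    then show False by simp
  qed
  then show ?thesis using P(3) by blast
qed

lemma walk_factor: "is_string Qb (u, L) \<Longrightarrow> L \<noteq> [] \<Longrightarrow> \<exists>\<omega> A C. is_walk Qb \<omega> \<and> snd \<omega> = A @ L @ C"
proof -
  assume s: "is_string Qb (u, L)" and L: "L \<noteq> []"
  obtain P where P: "is_string Qb (u, L @ P)" "str_end Qb (u, L @ P) \<notin> verts Q" using append_ext[OF s L] by blast
  let ?e = "str_end Qb (u, L @ P)"
  have si: "is_string Qb (?e, rl (L @ P))" using is_string_inv[OF wfQb P(1)] by (simp add: inv_str_simp)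
  obtain P2 where P2: "is_string Qb (?e, rl (L @ P) @ P2)" "str_end Qb (?e, rl (L @ P) @ P2) \<notin> verts Q"
    using append_ext[OF si] L by auto
  let ?X = "rl (L @ P) @ P2"
  define \<omega> where "\<omega> = inv_str Qb (?e, ?X)"
  have ch: "chain Qb ?e ?X" using P2(1) by (simp add: is_string_chain)
  have w1: "\<omega> = (str_end Qb (?e, ?X), rl P2 @ L @ P)" unfolding \<omega>_def by (simp add: inv_str_simp)
  have ws: "is_string Qb \<omega>" unfolding \<omega>_def by (rule is_string_inv[OF wfQb P2(1)])
  have we: "str_end Qb \<omega> = ?e" unfolding \<omega>_def inv_str_simp using chain_rl[OF ch] by simp
  have ne: "rl P2 @ L @ P \<noteq> []" using L by simp
  have "is_walk Qb \<omega>"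
    unfolding is_walk_def
  proof (intro conjI notI)
    show "is_string Qb \<omega>" by (rule ws)
  next
    assume "\<exists>l. is_string Qb (fst \<omega>, snd \<omega> @ [l])"
    then obtain l where "is_string Qb (fst \<omega>, snd \<omega> @ [l])" by blast
    moreover have "is_string Qb (fst \<omega>, snd \<omega>)" using ws by simp
    moreover have "str_end Qb (fst \<omega>, snd \<omega>) \<notin> verts Q" using we P(2) by (simp add: w1)
    ultimately show False using noext_end ne w1 by (metis snd_conv)
  next
    assume "\<exists>l. is_string Qb (lsrc Qb l, l # snd \<omega>)"
    then obtain l where "is_string Qb (lsrc Qb l, l # snd \<omega>)" by blast
    moreover have "is_string Qb (fst \<omega>, snd \<omega>)" using ws by simp
    moreover have "fst \<omega> \<notin> verts Q" using P2(2) w1 by simp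
    ultimately show False using noext_front ne w1 by (metis snd_conv)
  qed
  then show ?thesis using w1 by (intro exI[of _ \<omega>] exI[of _ "rl P2"] exI[of _ P]) simp
qed

lemma string_bound: "\<exists>N. \<forall>u L. is_string Qb (u, L) \<longrightarrow> length L \<le> N"
proof -
  obtain N where N: "\<forall>\<omega>. is_walk Qb \<omega> \<longrightarrow> length (snd \<omega>) \<le> N" using walk_bound by blast
  have "length L \<le> N" if "is_string Qb (u, L)" for u L
  proof (cases "L = []")
    case False
    from walk_factor[OF that False] obtain \<omega> A C where "is_walk Qb \<omega>" "snd \<omega> = A @ L @ C" by blast
    with N show ?thesis by fastforce
  qed simp
  then show ?thesis by blast
qed

end



context setting2
begin

definition postc where
  "postc S \<beta> post \<longleftrightarrow> (\<forall>i<length post. (\<not> snd (post ! i)) \<longleftrightarrow> (tgt Qb \<beta>, take i post) \<in> S)"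
definition prec where
  "prec S pre \<longleftrightarrow> (\<forall>k<length pre. snd (pre ! k) \<longleftrightarrow> (ltgt Qb (pre ! k), drop (Suc k) pre) \<in> S)"

lemma is_omega_iff: "is_omega Qb S \<beta> \<omega> \<longleftrightarrow> is_walk Qb \<omega> \<and> (\<exists>pre post. snd \<omega> = pre @ [(\<beta>, True)] @ post \<and> postc S \<beta> post \<and> prec S pre)"
  unfolding is_omega_def postc_def prec_def ..

lemma postc_snoc: "postc S \<beta> X \<Longrightarrow> (\<not> snd l) = ((tgt Qb \<beta>, X) \<in> S) \<Longrightarrow> postc S \<beta> (X @ [l])"
  unfolding postc_def
proof (intro allI impI)
  fix i assume a: "\<forall>i<length X. (\<not> snd (X ! i)) = ((tgt Qb \<beta>, take i X) \<in> S)" "(\<not> snd l) = ((tgt Qb \<beta>, X) \<in> S)"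
    and i: "i < length (X @ [l])"
  show "(\<not> snd ((X @ [l]) ! i)) = ((tgt Qb \<beta>, take i (X @ [l])) \<in> S)"
  proof (cases "i < length X")
    case True
    then show ?thesis using a(1) by (simp add: nth_append)
  next
    case False
    then have "i = length X" using i by simp
    then show ?thesis using a(2) by simp
  qed
qed

lemma prec_cons: "prec S X \<Longrightarrow> snd l = ((ltgt Qb l, X) \<in> S) \<Longrightarrow> prec S (l # X)"
  unfolding prec_def
proof (intro allI impI)
  fix k assume a: "\<forall>k<length X. snd (X ! k) = ((ltgt Qb (X ! k), drop (Suc k) X) \<in> S)" "snd l = ((ltgt Qb l, X) \<in> S)"
    and k: "k < length (l # X)"
  show "snd ((l # X) ! k) = ((ltgt Qb ((l # X) ! k), drop (Suc k) (l # X)) \<in> S)"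
  proof (cases k)
    case 0
    then show ?thesis using a(2) by simp
  next
    case (Suc j)
    then show ?thesis using a(1) k by simp
  qed
qed

lemma omega_exists:
  assumes base: "is_string Qb (s0, pre0 @ [(\<beta>, True)] @ R)" "postc S \<beta> R" "prec S pre0"
  shows "\<exists>\<omega> pre post. is_walk Qb \<omega> \<and> snd \<omega> = pre @ [(\<beta>, True)] @ R @ post \<and> prec S pre \<and> postc S \<beta> (R @ post)"
proof -
  obtain N where N: "\<forall>u L. is_string Qb (u, L) \<longrightarrow> length L \<le> N" using string_bound by blast
  define Pr where "Pr n = (\<exists>s pre post. length pre + length post = n \<and> is_string Qb (s, pre @ [(\<beta>, True)] @ R @ post)
     \<and> prec S pre \<and> postc S \<beta> (R @ post))" for n
  have "Pr (length pre0)" unfolding Pr_def using base by (intro exI[of _ s0] exI[of _ pre0] exI[of _ "[]"]) simp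
  moreover have "\<forall>n. Pr n \<longrightarrow> n \<le> N"
  proof (intro allI impI)
    fix n assume "Pr n"
    then obtain s pre post where "length pre + length post = n" "is_string Qb (s, pre @ [(\<beta>, True)] @ R @ post)"
      unfolding Pr_def by blast
    with N show "n \<le> N" by fastforce
  qed
  ultimately obtain n where n: "Pr n" "\<forall>k. Pr k \<longrightarrow> k \<le> n" using Nat.ex_has_greatest_nat[of Pr _ N] by blast
  then obtain s pre post where P: "length pre + length post = n" "is_string Qb (s, pre @ [(\<beta>, True)] @ R @ post)"
     "prec S pre" "postc S \<beta> (R @ post)" unfolding Pr_def by blast
  let ?X = "pre @ [(\<beta>, True)] @ R @ post"
  have ne: "?X \<noteq> []" by simp
  have "is_walk Qb (s, ?X)"
    unfolding is_walk_def fst_conv snd_conv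
  proof (intro conjI notI)
    show "is_string Qb (s, ?X)" by (rule P(2))
  next
    assume "\<exists>l. is_string Qb (s, ?X @ [l])"
    then obtain l where l: "is_string Qb (s, ?X @ [l])" by blast
    have ev: "str_end Qb (s, ?X) \<in> verts Q" using noext_end[OF P(2) ne] l by blast
    obtain l' where l': "snd l' = (\<not> ((tgt Qb \<beta>, R @ post) \<in> S))" "is_string Qb (s, ?X @ [l'])"
      using ext_end[OF P(2) ev] by blast
    have "postc S \<beta> ((R @ post) @ [l'])" using postc_snoc[OF P(4)] l'(1) by simp
    moreover have "is_string Qb (s, pre @ [(\<beta>, True)] @ R @ (post @ [l']))" using l'(2) by simp
    moreover have "length pre + length (post @ [l']) = Suc n" using P(1) by simp
    ultimately have "Pr (Suc n)" unfolding Pr_def using P(3) by (metis append.assoc)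
    then have "Suc n \<le> n" using n(2) by blast
    then show False by simp
  next
    assume "\<exists>l. is_string Qb (lsrc Qb l, l # ?X)"
    then obtain l where l: "is_string Qb (lsrc Qb l, l # ?X)" by blast
    have sv: "s \<in> verts Q" using noext_front[OF P(2) ne] l by blast
    obtain l' where l': "snd l' = ((s, pre) \<in> S)" "is_string Qb (lsrc Qb l', l' # ?X)"
      using ext_front[OF P(2) sv] by blast
    have "ltgt Qb l' = s"
    proof -
      have "chain Qb (ltgt Qb l') ?X" using l'(2) by (simp add: is_string_chain)
      moreover have "chain Qb s ?X" using P(2) by (simp add: is_string_chain)
      ultimately show ?thesis using ne by (cases ?X) auto
    qed
    then have "prec S (l' # pre)" using prec_cons[OF P(3)] l'(1) by simp
    moreover have "is_string Qb (lsrc Qb l', (l' # pre) @ [(\<beta>, True)] @ R @ post)" using l'(2) by simp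
    moreover have "length (l' # pre) + length post = Suc n" using P(1) by simp
    ultimately have "Pr (Suc n)" unfolding Pr_def using P(4) by blast
    then have "Suc n \<le> n" using n(2) by blast
    then show False by simp
  qed
  then show ?thesis using P by (intro exI[of _ "(s, ?X)"] exI[of _ pre] exI[of _ post]) simp
qed

end



lemma app_split: "xs @ ys = zs @ ts \<Longrightarrow> length xs \<le> length zs \<Longrightarrow> \<exists>us. zs = xs @ us \<and> ys = us @ ts"
  by (metis append_eq_append_conv_if append_take_drop_id)

locale setting3 = setting2 +
  fixes S
  assumes SB: "S \<in> Bicl Q"
begin

lemma S_str: "S \<subseteq> Strings Q" and S_inv: "inv_str Q ` S \<subseteq> S" and S_clos: "clos Q S = S"
  and C_clos: "clos Q (Strings Q - S) = Strings Q - S"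
  using SB by (auto simp: Bicl_def)

lemma S_string: "x \<in> S \<Longrightarrow> is_string Q x" using S_str by (auto simp: Strings_def)

lemma prec_at: "prec S pre \<Longrightarrow> pre = X @ l # Y \<Longrightarrow> snd l \<longleftrightarrow> (ltgt Qb l, Y) \<in> S"
  unfolding prec_def
  by (drule spec[of _ "length X"]) (simp add: nth_append)

lemma postc_at: "postc S \<beta> post \<Longrightarrow> post = X @ l # Y \<Longrightarrow> (\<not> snd l) \<longleftrightarrow> (tgt Qb \<beta>, X) \<in> S"
  unfolding postc_def
  by (drule spec[of _ "length X"]) (simp add: nth_append)

lemma qs_split: "is_string Q (w, X @ l # Y) \<Longrightarrow> fst l \<in> arrs Q \<and> lsrc Q l = str_end Q (w, X) \<and> is_string Q (w, X)
   \<and> is_string Q (ltgt Q l, Y) \<and> str_end Qb (w, X) = str_end Q (w, X) \<and> ltgt Qb l = ltgt Q l \<and> lsrc Qb l = lsrc Q l"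
proof -
  assume s: "is_string Q (w, X @ l # Y)"
  then have c: "chain Q w X" "chain Q (str_end Q (w, X)) (l # Y)" "w \<in> verts Q" by (simp_all add: is_string_chain chain_append)
  then have a: "fst l \<in> arrs Q" "lsrc Q l = str_end Q (w, X)" by simp_all
  have "is_string Q (w, X)" using c by (simp add: is_string_chain)
  moreover have "is_string Q (ltgt Q l, Y)"
    using is_string_suffix[OF wfQ, of w "X @ [l]" Y] s by (simp add: str_end_append)
  moreover have "str_end Qb (w, X) = str_end Q (w, X)" using chain_Q_Qb[OF c(1)] by blast
  ultimately show ?thesis using a ltgtQ lsrcQ by simp
qed

lemma XW_string: "is_string Qb \<omega> \<Longrightarrow> \<tau> \<in> XW Q Qb \<omega> \<Longrightarrow> is_string Q \<tau>"
proof -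
  assume s: "is_string Qb \<omega>" and t: "\<tau> \<in> XW Q Qb \<omega>"
  then obtain A B C where tau: "\<tau> = (str_end Qb (fst \<omega>, A), B)" and d: "snd \<omega> = A @ B @ C"
      "vs Qb (str_end Qb (fst \<omega>, A), B) \<subseteq> verts Q"
    unfolding XW_def by auto
  have "is_string Qb (fst \<omega>, A @ B)" using s d(1) is_string_prefix[of Qb "fst \<omega>" "A @ B" C] by (cases \<omega>) simp
  then have "is_string Qb (str_end Qb (fst \<omega>, A), B)" by (rule is_string_suffix[OF wfQb])
  then show ?thesis using string_Qb_Q d(2) tau by simp
qed

lemma omega_XW_S: "is_omega Qb S \<beta> \<omega> \<Longrightarrow> XW Q Qb \<omega> \<subseteq> S"
proof
  fix \<tau> assume om: "is_omega Qb S \<beta> \<omega>" and t: "\<tau> \<in> XW Q Qb \<omega>"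
  obtain pre post where w: "is_walk Qb \<omega>" "snd \<omega> = pre @ [(\<beta>, True)] @ post" "postc S \<beta> post" "prec S pre"
    using om unfolding is_omega_iff by blast
  have ws: "is_string Qb \<omega>" using w(1) by (simp add: is_walk_def)
  have tQ: "is_string Q \<tau>" using XW_string[OF ws t] .
  obtain A B C where tau: "\<tau> = (str_end Qb (fst \<omega>, A), B)" and d: "snd \<omega> = A @ B @ C" "A \<noteq> []" "snd (last A)" "C \<noteq> []" "\<not> snd (hd C)"
    using t unfolding XW_def by auto
  obtain A0 a where Ad: "A = A0 @ [a]" using d(2) by (cases A rule: rev_cases) auto
  obtain c C1 where Cd: "C = c # C1" using d(4) by (cases C) auto
  have da: "snd a" using d(3) Ad by simp
  have dc: "\<not> snd c" using d(5) Cd by simp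
  let ?s = "fst \<omega>"
  have eq: "pre @ [(\<beta>, True)] @ post = A @ B @ C" using w(2) d(1) by simp
  have sA: "str_end Qb (?s, A) = ltgt Qb a" using Ad by (simp add: str_end_simp)
  show "\<tau> \<in> S"
  proof (cases "length (pre @ [(\<beta>, True)]) \<le> length A")
    case True
    from app_split[of "pre @ [(\<beta>, True)]" post A "B @ C"] eq True
    obtain A' where A': "A = pre @ [(\<beta>, True)] @ A'" "post = A' @ B @ C" by auto
    have se: "str_end Qb (?s, A) = str_end Qb (tgt Qb \<beta>, A')" using A' by (simp add: str_end_append)
    have inS: "(tgt Qb \<beta>, A' @ B) \<in> S" using postc_at[OF w(3), of "A' @ B" c C1] A'(2) Cd dc by simp
    show ?thesis
    proof (cases "A' = []")
      case True
      then show ?thesis using inS tau se by simp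
    next
      case False
      obtain A1 a' where A'd: "A' = A1 @ [a']" using False by (cases A' rule: rev_cases) auto
      have aa: "a' = a" using A'd A'(1) Ad by simp
      have notS: "(tgt Qb \<beta>, A1) \<notin> S"
        using postc_at[OF w(3), of A1 a' "B @ C"] A'(2) A'd aa da by simp
      show ?thesis
      proof (rule ccontr)
        assume tn: "\<tau> \<notin> S"
        let ?w = "tgt Qb \<beta>"
        have sQ: "is_string Q (?w, A1 @ a' # B)" using S_string[OF inS] A'd by simp
        note q = qs_split[OF sQ]
        have "(fst (?w, A1), snd (?w, A1) @ [a'] @ snd \<tau>) \<in> Strings Q - S"
        proof (rule clos_closed_join[OF C_clos])
          show "(?w, A1) \<in> Strings Q - S" using q notS by (simp add: Strings_def)
          show "\<tau> \<in> Strings Q - S" using tQ tn by (simp add: Strings_def)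
          show "fst a' \<in> arrs Q" using q by simp
          show "lsrc Q a' = str_end Q (?w, A1)" using q by simp
          have "fst \<tau> = str_end Qb (?w, A1 @ [a'])" using tau se A'd by simp
          also have "\<dots> = ltgt Q a'" using q by (simp add: str_end_append)
          finally show "ltgt Q a' = fst \<tau>" by simp
          show "is_string Q (fst (?w, A1), snd (?w, A1) @ [a'] @ snd \<tau>)" using sQ tau by simp
        qed
        moreover have "(fst (?w, A1), snd (?w, A1) @ [a'] @ snd \<tau>) = (?w, A' @ B)"
          using tau A'd by simp
        ultimately show False using inS by simp
      qed
    qed
  next
    case False
    note F1 = False
    show ?thesis
    proof (cases "length (A @ B) \<le> length pre")
      case True
      from app_split[of "A @ B" C pre "[(\<beta>, True)] @ post"] eq True
      obtain C' where C': "pre = A @ B @ C'" "C = C' @ [(\<beta>, True)] @ post" by auto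
      have C'ne: "C' \<noteq> []" using C' d(5) by auto
      then obtain c' C2 where C'd: "C' = c' # C2" by (cases C') auto
      have cc: "c' = c" using C'd C'(2) Cd by simp
      have inS: "(str_end Qb (?s, A), B @ C') \<in> S"
      proof -
        have "snd a \<longleftrightarrow> (ltgt Qb a, B @ C') \<in> S"
          using prec_at[OF w(4), of A0 a "B @ C'"] C'(1) Ad by simp
        then show ?thesis using da sA by simp
      qed
      have notS: "(ltgt Qb c', C2) \<notin> S"
        using prec_at[OF w(4), of "A @ B" c' C2] C'(1) C'd cc dc by simp
      show ?thesis
      proof (rule ccontr)
        assume tn: "\<tau> \<notin> S"
        let ?w = "str_end Qb (?s, A)"
        have sQ: "is_string Q (?w, B @ c' # C2)" using S_string[OF inS] C'd by simp
        note q = qs_split[OF sQ]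
        have "(fst \<tau>, snd \<tau> @ [c'] @ snd (ltgt Q c', C2)) \<in> Strings Q - S"
        proof (rule clos_closed_join[OF C_clos])
          show "\<tau> \<in> Strings Q - S" using tQ tn by (simp add: Strings_def)
          show "(ltgt Q c', C2) \<in> Strings Q - S" using q notS by (simp add: Strings_def)
          show "fst c' \<in> arrs Q" using q by simp
          show "lsrc Q c' = str_end Q \<tau>" using q tau by simp
          show "ltgt Q c' = fst (ltgt Q c', C2)" by simp
          show "is_string Q (fst \<tau>, snd \<tau> @ [c'] @ snd (ltgt Q c', C2))" using sQ tau by simp
        qed
        moreover have "(fst \<tau>, snd \<tau> @ [c'] @ snd (ltgt Q c', C2)) = (?w, B @ C')" using tau C'd by simp
        ultimately show False using inS by simp
      qed
    next
      case False
      from app_split[of A "B @ C" pre "[(\<beta>, True)] @ post"] eq F1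
      obtain B1 where B1: "pre = A @ B1" "B @ C = B1 @ [(\<beta>, True)] @ post" by fastforce
      have "length B1 \<le> length B" using B1 False by simp
      from app_split[of B1 "[(\<beta>, True)] @ post" B C] B1(2) this
      obtain V where V: "B = B1 @ V" "[(\<beta>, True)] @ post = V @ C" by auto
      have "V \<noteq> []" using V B1 False by auto
      then obtain B2 where B2: "V = (\<beta>, True) # B2" "post = B2 @ C" using V(2) by (cases V) auto
      have in1: "(str_end Qb (?s, A), B1) \<in> S"
      proof -
        have "snd a \<longleftrightarrow> (ltgt Qb a, B1) \<in> S"
          using prec_at[OF w(4), of A0 a B1] B1(1) Ad by simp
        then show ?thesis using da sA by simp
      qed
      have in2: "(tgt Qb \<beta>, B2) \<in> S" using postc_at[OF w(3), of B2 c C1] B2(2) Cd dc by simp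
      let ?w = "str_end Qb (?s, A)"
      have sQ: "is_string Q (?w, B1 @ (\<beta>, True) # B2)" using tQ tau V B2 by simp
      note q = qs_split[OF sQ]
      have "(fst (?w, B1), snd (?w, B1) @ [(\<beta>, True)] @ snd (tgt Qb \<beta>, B2)) \<in> S"
      proof (rule clos_closed_join[OF S_clos in1 in2])
        show "fst (\<beta>, True) \<in> arrs Q" using q by simp
        show "lsrc Q (\<beta>, True) = str_end Q (str_end Qb (fst \<omega>, A), B1)" using q by simp
        show "ltgt Q (\<beta>, True) = fst (tgt Qb \<beta>, B2)" using q by simp
        show "is_string Q (fst (?w, B1), snd (?w, B1) @ [(\<beta>, True)] @ snd (tgt Qb \<beta>, B2))" using sQ by simp
      qed
      then show ?thesis using tau V B2 by simp
    qed
  qed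
qed

end



context setting3
begin

lemma BF_QQb: "is_string Q \<tau> \<Longrightarrow> BF Q \<tau> = BF Qb \<tau>"
proof -
  assume s: "is_string Q \<tau>"
  have "str_end Q (fst \<tau>, A) = str_end Qb (fst \<tau>, A)" if "snd \<tau> = A @ B @ C" for A B C
  proof -
    have "chain Q (fst \<tau>) A" using s that by (cases \<tau>) (simp add: is_string_chain chain_append)
    then show ?thesis using chain_Q_Qb by metis
  qed
  then show ?thesis unfolding BF_def by (intro Collect_cong) metis
qed

definition good where "good \<omega> \<longleftrightarrow> is_string Qb \<omega> \<and> XW Q Qb \<omega> \<subseteq> S"

lemma S_inv': "x \<in> S \<Longrightarrow> inv_str Q x \<in> S" using S_inv by blast

lemma good_inv: "good \<omega> \<Longrightarrow> good (inv_str Qb \<omega>)"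
proof -
  assume g: "good \<omega>"
  obtain v ls where vls: "\<omega> = (v, ls)" by (cases \<omega>)
  have s: "is_string Qb (v, ls)" using g vls by (simp add: good_def)
  have ch: "chain Qb v ls" using s by (simp add: is_string_chain)
  have si: "is_string Qb (inv_str Qb (v, ls))" by (rule is_string_inv[OF wfQb s])
  have chi: "chain Qb (str_end Qb (v, ls)) (rl ls)" using chain_rl[OF ch] by blast
  have "XW Q Qb (inv_str Qb (v, ls)) \<subseteq> S"
  proof
    fix \<tau> assume t: "\<tau> \<in> XW Q Qb (inv_str Qb (v, ls))"
    have tQ: "is_string Q \<tau>" using XW_string[OF si t] .
    obtain w B where wB: "\<tau> = (w, B)" by (cases \<tau>)
    have chQ: "chain Q w B" using tQ wB by (simp add: is_string_chain)
    have chb: "chain Qb w B" using chain_Q_Qb[OF chQ] by blast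
    have "inv_str Qb \<tau> \<in> XW Q Qb (inv_str Qb (inv_str Qb (v, ls)))"
      using XW_inv[OF chi] t by (simp add: inv_str_simp)
    then have x0: "inv_str Qb \<tau> \<in> XW Q Qb (v, ls)" using inv_inv[OF ch] by simp
    have "XW Q Qb (v, ls) \<subseteq> S" using g vls by (simp add: good_def)
    then have x: "inv_str Qb \<tau> \<in> S" using x0 by blast
    have "inv_str Q (inv_str Qb \<tau>) \<in> S" by (rule S_inv'[OF x])
    moreover have "inv_str Q (inv_str Qb \<tau>) = inv_str Qb (inv_str Qb \<tau>)"
    proof -
      have "is_string Q (inv_str Qb \<tau>)" using S_string[OF x] .
      then obtain w' B' where "inv_str Qb \<tau> = (w', B')" "chain Q w' B'" by (cases "inv_str Qb \<tau>") (auto simp: is_string_chain)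
      then show ?thesis using inv_Q_Qb by metis
    qed
    moreover have "inv_str Qb (inv_str Qb \<tau>) = \<tau>" using inv_inv[OF chb] wB by simp
    ultimately show "\<tau> \<in> S" by simp
  qed
  then show ?thesis using si vls by (simp add: good_def)
qed

lemma BF_sub_sym: "BF G \<tau> \<subseteq> sigma_bot_str G \<tau>"
  unfolding sigma_bot_str_BF sym_cl_def by blast

lemma good_XW_pi: "good \<omega> \<Longrightarrow> XW Q Qb \<omega> \<subseteq> pi_down Q S"
proof
  fix \<tau> assume g: "good \<omega>" and t: "\<tau> \<in> XW Q Qb \<omega>"
  have "is_string Qb \<omega>" using g by (simp add: good_def)
  from XW_string[OF this t] have tQ: "is_string Q \<tau>" .
  have "BF Q \<tau> \<subseteq> S" using BF_QQb[OF tQ] XW_factor[OF t] g by (auto simp: good_def)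
  then have "sigma_bot_str Q \<tau> \<subseteq> S" unfolding sigma_bot_str_BF sym_cl_def using S_inv by blast
  then show "\<tau> \<in> pi_down Q S" using tQ by (simp add: pi_down_def Strings_def)
qed

lemma eta_good: "\<omega> \<in> eta Qb S \<Longrightarrow> good \<omega>"
proof -
  assume "\<omega> \<in> eta Qb S"
  then obtain \<omega>0 \<beta> where o: "is_omega Qb S \<beta> \<omega>0" "\<omega> = \<omega>0 \<or> \<omega> = inv_str Qb \<omega>0"
    unfolding eta_def sym_cl_def by blast
  have "good \<omega>0" using omega_XW_S[OF o(1)] o(1) by (simp add: good_def is_omega_def is_walk_def)
  then show ?thesis using o(2) good_inv by blast
qed

lemma U_pi: "\<omega> \<in> eta Qb S \<Longrightarrow> sigma_bot_walk Q Qb \<omega> \<subseteq> pi_down Q S"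
proof
  fix x assume e: "\<omega> \<in> eta Qb S" and x: "x \<in> sigma_bot_walk Q Qb \<omega>"
  have g: "good \<omega>" by (rule eta_good[OF e])
  obtain v ls where vls: "\<omega> = (v, ls)" by (cases \<omega>)
  have ch: "chain Qb v ls" using g vls by (simp add: good_def is_string_chain)
  from x consider "x \<in> XW Q Qb \<omega>" | \<tau> where "\<tau> \<in> XW Q Qb \<omega>" "x = inv_str Qb \<tau>"
    unfolding sigma_bot_walk_XW sym_cl_def by blast
  then show "x \<in> pi_down Q S"
  proof cases
    case 1 then show ?thesis using good_XW_pi[OF g] by blast
  next
    case 2
    then have "x \<in> XW Q Qb (inv_str Qb \<omega>)" using XW_inv[OF ch] vls by simp
    then show ?thesis using good_XW_pi[OF good_inv[OF g]] by blast
  qed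
qed

lemma pi_BF: "\<sigma> \<in> pi_down Q S \<Longrightarrow> BF Q \<sigma> \<subseteq> S"
  unfolding pi_down_def using BF_sub_sym[of Q \<sigma>] by blast

lemma pi_join: "\<rho> \<in> pi_down Q S \<Longrightarrow> \<tau> \<in> pi_down Q S \<Longrightarrow> fst l \<in> arrs Q \<Longrightarrow> lsrc Q l = str_end Q \<rho> \<Longrightarrow>
   ltgt Q l = fst \<tau> \<Longrightarrow> is_string Q (fst \<rho>, snd \<rho> @ [l] @ snd \<tau>) \<Longrightarrow> (fst \<rho>, snd \<rho> @ [l] @ snd \<tau>) \<in> pi_down Q S"
proof -
  assume r: "\<rho> \<in> pi_down Q S" and t: "\<tau> \<in> pi_down Q S" and l: "fst l \<in> arrs Q" "lsrc Q l = str_end Q \<rho>"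
    "ltgt Q l = fst \<tau>" and s: "is_string Q (fst \<rho>, snd \<rho> @ [l] @ snd \<tau>)"
  obtain u X where rho: "\<rho> = (u, X)" by (cases \<rho>)
  obtain w Y where tau: "\<tau> = (w, Y)" by (cases \<tau>)
  have bfr: "BF Q (u, X) \<subseteq> S" using pi_BF[OF r] rho by simp
  have bft: "BF Q (w, Y) \<subseteq> S" using pi_BF[OF t] tau by simp
  have lw: "ltgt Q l = w" using l(3) tau by simp
  have lu: "lsrc Q l = str_end Q (u, X)" using l(2) rho by simp
  have s': "is_string Q (u, X @ [l] @ Y)" using s rho tau by simp
  have "BF Q (u, X @ [l] @ Y) \<subseteq> S"
  proof
    fix x assume "x \<in> BF Q (u, X @ [l] @ Y)"
    then obtain A B C where x: "x = (str_end Q (u, A), B)" and d: "X @ [l] @ Y = A @ B @ C" "A = [] \<or> snd (last A)" "C = [] \<or> \<not> snd (hd C)"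
      unfolding BF_def by auto
    show "x \<in> S"
    proof (cases "length (X @ [l]) \<le> length A")
      case True
      from app_split[of "X @ [l]" Y A "B @ C"] d(1) True
      obtain A' where A': "A = X @ [l] @ A'" "Y = A' @ B @ C" by auto
      have "x = (str_end Q (w, A'), B)" using x A' lw by (simp add: str_end_append)
      moreover have "A' = [] \<or> snd (last A')" using d(2) A'(1) by (cases "A' = []") auto
      ultimately have "x \<in> BF Q (w, Y)" unfolding BF_def using A'(2) d(3) by auto
      then show ?thesis using bft by blast
    next
      case False
      note F1 = False
      show ?thesis
      proof (cases "length (A @ B) \<le> length X")
        case True
        from app_split[of "A @ B" C X "[l] @ Y"] d(1) True
        obtain C' where C': "X = A @ B @ C'" "C = C' @ [l] @ Y" by auto
        have "C' = [] \<or> \<not> snd (hd C')" using d(3) C'(2) by (cases C') auto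
        then have "x \<in> BF Q (u, X)" unfolding BF_def using C'(1) d(2) x by auto
        then show ?thesis using bfr by blast
      next
        case False
        from app_split[of A "B @ C" X "[l] @ Y"] d(1) F1
        obtain B1 where B1: "X = A @ B1" "B @ C = B1 @ [l] @ Y" by fastforce
        have "length B1 \<le> length B" using B1 False by simp
        from app_split[of B1 "[l] @ Y" B C] B1(2) this
        obtain V where V: "B = B1 @ V" "[l] @ Y = V @ C" by auto
        have "V \<noteq> []" using V B1 False by auto
        then obtain B2 where B2: "V = l # B2" "Y = B2 @ C" using V(2) by (cases V) auto
        have "X = A @ B1 @ []" using B1(1) by simp
        then have "(str_end Q (fst (u, X), A), B1) \<in> BF Q (u, X)"
          unfolding BF_def snd_conv using d(2) by blast
        then have in1: "(str_end Q (u, A), B1) \<in> S" using bfr by auto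
        have "Y = [] @ B2 @ C" using B2(2) by simp
        then have "(str_end Q (fst (w, Y), []), B2) \<in> BF Q (w, Y)"
          unfolding BF_def snd_conv using d(3) by blast
        then have in2: "(w, B2) \<in> S" using bft by auto
        have sx: "is_string Q (str_end Q (u, A), B1 @ [l] @ B2)"
        proof -
          have "is_string Q (u, A @ (B1 @ [l] @ B2))"
            using s' is_string_prefix[of Q u "A @ (B1 @ [l] @ B2)" C] B1 B2 V by simp
          then show ?thesis by (rule is_string_suffix[OF wfQ])
        qed
        have "(fst (str_end Q (u, A), B1), snd (str_end Q (u, A), B1) @ [l] @ snd (w, B2)) \<in> S"
        proof (rule clos_closed_join[OF S_clos in1 in2 l(1)])
          show "lsrc Q l = str_end Q (str_end Q (u, A), B1)" using lu B1(1) by (simp add: str_end_append)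
          show "ltgt Q l = fst (w, B2)" using lw by simp
          show "is_string Q (fst (str_end Q (u, A), B1), snd (str_end Q (u, A), B1) @ [l] @ snd (w, B2))" using sx by simp
        qed
        then show ?thesis using x V B2 by simp
      qed
    qed
  qed
  then have "sigma_bot_str Q (u, X @ [l] @ Y) \<subseteq> S" unfolding sigma_bot_str_BF sym_cl_def using S_inv by blast
  then show ?thesis using s' rho tau by (simp add: pi_down_def Strings_def)
qed

lemma zeta_sub: "zeta Q Qb (eta Qb S) \<subseteq> pi_down Q S"
proof
  fix x assume "x \<in> zeta Q Qb (eta Qb S)"
  then show "x \<in> pi_down Q S" unfolding zeta_def
  proof (induction rule: clos.induct)
    case (base \<sigma>)
    then show ?case using U_pi by blast
  next
    case (join \<rho> \<tau> l)
    have "\<tau> \<in> pi_down Q S" using join.hyps(2) U_pi by blast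
    then show ?case using pi_join join by blast
  qed
qed

end



context setting3
begin

lemma ext_front2: "is_string Qb (u, L) \<Longrightarrow> u \<in> verts Q \<Longrightarrow> \<exists>l. snd l = d \<and> ltgt Qb l = u \<and> is_string Qb (lsrc Qb l, l # L)"
proof -
  assume s: "is_string Qb (u, L)" and u: "u \<in> verts Q"
  have ch: "chain Qb u L" using s by (simp add: is_string_chain)
  have si: "is_string Qb (str_end Qb (u, L), rl L)" using is_string_inv[OF wfQb s] by (simp add: inv_str_simp)
  have e: "str_end Qb (str_end Qb (u, L), rl L) = u" using chain_rl[OF ch] by blast
  obtain l' where l': "snd l' = (\<not> d)" "is_string Qb (str_end Qb (u, L), rl L @ [l'])"
    using ext_end[OF si, of "\<not> d"] e u by auto
  have "lsrc Qb l' = u" using l'(2) e by (simp add: is_string_chain chain_append)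
  moreover have "is_string Qb (inv_str Qb (str_end Qb (u, L), rl L @ [l']))" by (rule is_string_inv[OF wfQb l'(2)])
  moreover have "inv_str Qb (str_end Qb (u, L), rl L @ [l']) = (lsrc Qb (flip l'), flip l' # L)"
    by (simp add: inv_str_simp str_end_append)
  ultimately show ?thesis using l'(1) by (intro exI[of _ "flip l'"]) simp
qed

lemma pi_zeta: "\<sigma> \<in> pi_down Q S \<Longrightarrow> \<sigma> \<in> zeta Q Qb (eta Qb S)"
proof (induction "length (snd \<sigma>)" arbitrary: \<sigma> rule: less_induct)
  case less
  obtain v L where vL: "\<sigma> = (v, L)" by (cases \<sigma>)
  have sQ: "is_string Q (v, L)" using less.prems vL by (simp add: pi_down_def Strings_def)
  have BFs: "BF Q (v, L) \<subseteq> S" using pi_BF less.prems vL by simp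
  have vv: "v \<in> verts Q" using sQ by (simp add: is_string_chain)
  have sb: "is_string Qb (v, L)" using string_Q_Qb[OF sQ] .
  obtain l0 where l0: "snd l0" "ltgt Qb l0 = v" "is_string Qb (lsrc Qb l0, l0 # L)"
    using ext_front2[OF sb vv, of True] by blast
  define \<beta> where "\<beta> = fst l0"
  have l0b: "l0 = (\<beta>, True)" using l0(1) \<beta>_def by (cases l0) simp
  have tb: "tgt Qb \<beta> = v" using l0(2) l0b by simp
  have barr: "\<beta> \<in> arrs Qb" using l0(3) l0b by (simp add: is_string_chain)
  define P where "P k = (k = length L \<or> (k < length L \<and> snd (L ! k) \<and> (v, take k L) \<in> S))" for k
  define i where "i = (LEAST k. P k)"
  have Pi: "P i" unfolding i_def by (rule LeastI[of P "length L"]) (simp add: P_def)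
  have ile: "i \<le> length L" unfolding i_def by (rule Least_le) (simp add: P_def)
  have lessi: "\<not> P k" if "k < i" for k using not_less_Least[of k P] that unfolding i_def by blast
  have rhoS: "(v, take i L) \<in> S"
  proof (cases "i = length L")
    case True
    have "L = [] @ L @ []" by simp
    then have "(str_end Q (fst (v, L), []), L) \<in> BF Q (v, L)" unfolding BF_def snd_conv by blast
    then show ?thesis using BFs True by auto
  next
    case False
    then show ?thesis using Pi by (simp add: P_def)
  qed
  have signs: "(\<not> snd (L ! k)) \<longleftrightarrow> (v, take k L) \<in> S" if "k < i" for k
  proof
    assume n: "\<not> snd (L ! k)"
    have kl: "k < length L" using that ile by simp
    have "L = [] @ take k L @ drop k L" by simp
    moreover have "drop k L = [] \<or> \<not> snd (hd (drop k L))" using n kl by (simp add: hd_drop_nth)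
    ultimately have "(str_end Q (fst (v, L), []), take k L) \<in> BF Q (v, L)" unfolding BF_def snd_conv by blast
    then show "(v, take k L) \<in> S" using BFs by auto
  next
    assume "(v, take k L) \<in> S"
    then show "\<not> snd (L ! k)" using lessi[OF that] that ile unfolding P_def by auto
  qed
  have s1: "is_string Qb (src Qb \<beta>, (\<beta>, True) # take i L)"
    using l0(3) l0b is_string_prefix[of Qb "src Qb \<beta>" "(\<beta>, True) # take i L" "drop i L"] by simp
  have sQi: "is_string Q (v, take i L)" using is_string_prefix[of Q v "take i L" "drop i L"] sQ by simp
  have chi: "chain Q v (take i L)" using sQi by (simp add: is_string_chain)
  have endv: "str_end Qb (src Qb \<beta>, (\<beta>, True) # take i L) \<in> verts Q"
  proof -
    have "str_end Qb (src Qb \<beta>, (\<beta>, True) # take i L) = str_end Q (v, take i L)"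
      using tb chain_Q_Qb[OF chi] by simp
    also have "\<dots> \<in> verts Q" using str_end_verts[OF wfQ vv chi] .
    finally show ?thesis .
  qed
  obtain x where x: "\<not> snd x" "is_string Qb (src Qb \<beta>, ((\<beta>, True) # take i L) @ [x])"
    using ext_end[OF s1 endv, of False] by auto
  let ?R = "take i L @ [x]"
  have pc: "postc S \<beta> ?R"
    unfolding postc_def
  proof (intro allI impI)
    fix j assume j: "j < length ?R"
    show "(\<not> snd (?R ! j)) = ((tgt Qb \<beta>, take j ?R) \<in> S)"
    proof (cases "j < i")
      case True
      then show ?thesis using signs[OF True] tb ile by (simp add: nth_append)
    next
      case False
      then have "j = i" using j ile by simp
      then show ?thesis using x(1) rhoS tb ile by (simp add: nth_append)
    qed
  qed
  have pr: "prec S []" by (simp add: prec_def)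
  obtain \<omega> pre post where om: "is_walk Qb \<omega>" "snd \<omega> = pre @ [(\<beta>, True)] @ ?R @ post" "prec S pre" "postc S \<beta> (?R @ post)"
    using omega_exists[of "src Qb \<beta>" "[]" \<beta> ?R S] x(2) pc pr by auto
  have "is_omega Qb S \<beta> \<omega>" unfolding is_omega_iff using om by blast
  then have oe: "\<omega> \<in> eta Qb S" unfolding eta_def sym_cl_def using barr by blast
  have "(v, take i L) \<in> XW Q Qb \<omega>"
  proof -
    have "snd \<omega> = (pre @ [(\<beta>, True)]) @ take i L @ (x # post)" using om(2) by simp
    moreover have "str_end Qb (fst \<omega>, pre @ [(\<beta>, True)]) = v" using tb by (simp add: str_end_simp)
    moreover have "vs Qb (v, take i L) \<subseteq> verts Q" using chain_Q_Qb[OF chi] vs_string[OF sQi] by simp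
    ultimately show ?thesis unfolding XW_def using x(1) by force
  qed
  then have "(v, take i L) \<in> sigma_bot_walk Q Qb \<omega>" unfolding sigma_bot_walk_XW sym_cl_def by blast
  then have rz: "(v, take i L) \<in> zeta Q Qb (eta Qb S)" unfolding zeta_def using oe by (blast intro: clos.base)
  show ?case
  proof (cases "i = length L")
    case True
    then show ?thesis using rz vL by simp
  next
    case False
    then have il: "i < length L" using ile by simp
    have Ld: "L = take i L @ L ! i # drop (Suc i) L" using il by (simp add: Cons_nth_drop_Suc)
    have sQ': "is_string Q (v, take i L @ L ! i # drop (Suc i) L)" using sQ Ld by simp
    note q = qs_split[OF sQ']
    have di: "snd (L ! i)" using Pi False by (simp add: P_def)
    let ?\<sigma>' = "(ltgt Q (L ! i), drop (Suc i) L)"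
    have "BF Q ?\<sigma>' \<subseteq> BF Q (v, L)"
    proof
      fix y assume "y \<in> BF Q ?\<sigma>'"
      then obtain A2 B2 C2 where y: "y = (str_end Q (ltgt Q (L ! i), A2), B2)" and d: "drop (Suc i) L = A2 @ B2 @ C2"
        "A2 = [] \<or> snd (last A2)" "C2 = [] \<or> \<not> snd (hd C2)" unfolding BF_def by auto
      have "L = (take i L @ [L ! i] @ A2) @ B2 @ C2" using Ld d(1) by simp
      moreover have "take i L @ [L ! i] @ A2 = [] \<or> snd (last (take i L @ [L ! i] @ A2))"
        using d(2) di by (cases "A2 = []") auto
      moreover have "y = (str_end Q (fst (v, L), take i L @ [L ! i] @ A2), B2)"
        using y by (simp add: str_end_append del: append_assoc)
      ultimately show "y \<in> BF Q (v, L)" unfolding BF_def snd_conv using d(3) by blast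
    qed
    then have "sigma_bot_str Q ?\<sigma>' \<subseteq> S" unfolding sigma_bot_str_BF sym_cl_def using BFs S_inv by blast
    then have "?\<sigma>' \<in> pi_down Q S" using q by (simp add: pi_down_def Strings_def)
    moreover have "length (snd ?\<sigma>') < length (snd \<sigma>)" using il vL by simp
    ultimately have z': "?\<sigma>' \<in> zeta Q Qb (eta Qb S)" using less.hyps by blast
    have "(fst (v, take i L), snd (v, take i L) @ [L ! i] @ snd ?\<sigma>') \<in> zeta Q Qb (eta Qb S)"
      unfolding zeta_def
    proof (rule clos_join_clos)
      show "?\<sigma>' \<in> clos Q (\<Union> (sigma_bot_walk Q Qb ` eta Qb S))" using z' unfolding zeta_def .
      show "(v, take i L) \<in> clos Q (\<Union> (sigma_bot_walk Q Qb ` eta Qb S))" using rz unfolding zeta_def .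
      show "fst (L ! i) \<in> arrs Q" using q by simp
      show "lsrc Q (L ! i) = str_end Q (v, take i L)" using q by simp
      show "ltgt Q (L ! i) = fst ?\<sigma>'" by simp
      show "is_string Q (fst (v, take i L), snd (v, take i L) @ [L ! i] @ snd ?\<sigma>')" using sQ' by simp
    qed
    then show ?thesis using vL Ld by simp
  qed
qed

lemma main: "zeta Q Qb (eta Qb S) = pi_down Q S"
  using zeta_sub pi_zeta by blast

end


theorem proposition9p17:
  fixes Q Qb :: "('v, 'a) bquiver" and S :: "('v, 'a) str set"
  assumes "gentle Q"
    and "is_blossoming Q Qb"
    and "finite_reduced_complex Qb"
    and "S \<in> Bicl Q"
  shows "zeta Q Qb (eta Qb S) = pi_down Q S"
proof -
  interpret setting3 Q Qb S
    by unfold_locales (use assms in auto)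
  show ?thesis by (rule main)
qed

end
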